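(* Let $\rho$ be an unknown density matrix and $U=e^{-i\rho}$. Kitaev's phase estimation on $U$ (estimating an eigenphase of $U$ on a given input state) to precision $\epsilon$ with constant failure probability can be performed using $O(1/\epsilon^2)$ copies of $\rho$.
   Context: Kitaev's phase estimation to precision $\epsilon$ with constant failure probability uses $O(1/\epsilon)$ applications of controlled-$U$; here each controlled-$U$ must be simulated from copies of $\rho$. *)

theory Defs
  imports "Jordan_Normal_Form.Matrix" "Jordan_Normal_Form.Schur_Decomposition"
begin

definition kron :: "complex mat \<Rightarrow> complex mat \<Rightarrow> complex mat" where
  "kron A B = mat (dim_row A * dim_row B) (dim_col A * dim_col B)
     (\<lambda>(i,j). A $$ (i div dim_row B, j div dim_col B) * B $$ (i mod dim_row B, j mod dim_col B))"

fun kpow :: "complex mat \<Rightarrow> nat \<Rightarrow> complex mat" where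
  "kpow A 0 = 1\<^sub>m 1"
| "kpow A (Suc n) = kron (kpow A n) A"

definition mat_exp :: "complex mat \<Rightarrow> complex mat" where
  "mat_exp A = mat (dim_row A) (dim_col A)
     (\<lambda>(i,j). \<Sum>k. (A ^\<^sub>m k) $$ (i,j) / of_nat (fact k))"

definition psd :: "nat \<Rightarrow> complex mat \<Rightarrow> bool" where
  "psd d A \<longleftrightarrow> A \<in> carrier_mat d d \<and> mat_adjoint A = A \<and>
     (\<forall>v \<in> carrier_vec d. 0 \<le> Re (\<Sum>i<d. cnj (v $ i) * (A *\<^sub>v v) $ i))"

definition mtrace :: "complex mat \<Rightarrow> complex" where
  "mtrace A = (\<Sum>i<dim_row A. A $$ (i,i))"

definition density_matrix :: "nat \<Rightarrow> complex mat \<Rightarrow> bool" where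
  "density_matrix d \<rho> \<longleftrightarrow> psd d \<rho> \<and> mtrace \<rho> = 1"

definition unit_state :: "nat \<Rightarrow> complex vec \<Rightarrow> bool" where
  "unit_state d v \<longleftrightarrow> v \<in> carrier_vec d \<and> (\<Sum>i<d. cmod (v $ i) ^ 2) = 1"

definition proj :: "complex vec \<Rightarrow> complex mat" where
  "proj v = mat (dim_vec v) (dim_vec v) (\<lambda>(i,j). v $ i * cnj (v $ j))"

definition povm :: "nat \<Rightarrow> nat \<Rightarrow> (nat \<Rightarrow> complex mat) \<Rightarrow> bool" where
  "povm D m M \<longleftrightarrow> (\<forall>k<m. psd D (M k)) \<and>
     mat D D (\<lambda>(i,j). \<Sum>k<m. M k $$ (i,j)) = 1\<^sub>m D"

definition phase_close :: "real \<Rightarrow> real \<Rightarrow> real \<Rightarrow> bool" where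
  "phase_close eps x theta \<longleftrightarrow> (\<exists>k::int. \<bar>x - theta - 2 * pi * of_int k\<bar> \<le> eps)"

end

theory Submission
  imports Defs
begin

lemma adj_alt: "mat_adjoint A = mat (dim_col A) (dim_row A) (\<lambda>(i,j). cnj (A $$ (j,i)))"
  unfolding mat_adjoint_def by (auto simp: mat_of_rows_def)
lemma adj_dims[simp]: "dim_row (mat_adjoint (A::complex mat)) = dim_col A" "dim_col (mat_adjoint (A::complex mat)) = dim_row A"
  by (simp_all add: adj_alt)
lemma adj_index[simp]: "i < dim_col (A::complex mat) \<Longrightarrow> j < dim_row A \<Longrightarrow> mat_adjoint A $$ (i,j) = cnj (A $$ (j,i))"
  by (auto simp: adj_alt)
lemma adj_adj[simp]: "mat_adjoint (mat_adjoint A) = (A::complex mat)"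
  by (rule eq_matI) simp_all
lemma mult_entry:
  fixes A B :: "complex mat"
  assumes "A \<in> carrier_mat n m" "B \<in> carrier_mat m p" "i < n" "j < p"
  shows "(A * B) $$ (i,j) = (\<Sum>k<m. A $$ (i,k) * B $$ (k,j))"
proof -
  have "(A*B)$$(i,j) = row A i \<bullet> col B j" by (rule index_mult_mat) (use assms in auto)
  also have "\<dots> = (\<Sum>k<m. row A i $ k * col B j $ k)" unfolding scalar_prod_def using assms by (simp add: lessThan_atLeast0)
  also have "\<dots> = (\<Sum>k<m. A $$ (i,k) * B $$ (k,j))" by (rule sum.cong) (use assms in auto)
  finally show ?thesis .
qed
lemma adj_carrier[simp]: "(A::complex mat) \<in> carrier_mat n m \<Longrightarrow> mat_adjoint A \<in> carrier_mat m n"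
  by (metis adj_dims carrier_matD carrier_matI)

lemma adj_mult:
  fixes A B :: "complex mat"
  assumes "A \<in> carrier_mat n m" "B \<in> carrier_mat m p"
  shows "mat_adjoint (A * B) = mat_adjoint B * mat_adjoint A"
proof (rule eq_matI)
  fix i j assume ij: "i < dim_row (mat_adjoint B * mat_adjoint A)" "j < dim_col (mat_adjoint B * mat_adjoint A)"
  hence i: "i < p" and j: "j < n" using assms by auto
  show "mat_adjoint (A * B) $$ (i, j) = (mat_adjoint B * mat_adjoint A) $$ (i, j)"
  proof -
    have "mat_adjoint (A * B) $$ (i, j) = cnj ((A*B) $$ (j,i))" using i j assms by auto
    also have "\<dots> = cnj (\<Sum>k<m. A $$ (j,k) * B $$ (k,i))" using mult_entry[OF assms j i] by simp
    also have "\<dots> = (\<Sum>k<m. cnj (B $$ (k,i)) * cnj (A $$ (j,k)))"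
      by (simp add: mult.commute)
    also have "\<dots> = (\<Sum>k<m. mat_adjoint B $$ (i,k) * mat_adjoint A $$ (k,j))"
      by (rule sum.cong) (use assms i j in auto)
    also have "\<dots> = (mat_adjoint B * mat_adjoint A) $$ (i, j)"
      using assms i j by (intro mult_entry[symmetric]) auto
    finally show ?thesis .
  qed
qed (use assms in auto)

definition dg :: "nat \<Rightarrow> (nat \<Rightarrow> complex) \<Rightarrow> complex mat" where
  "dg n f = mat n n (\<lambda>(i,j). if i = j then f i else 0)"

lemma dg_carrier[simp]: "dg n f \<in> carrier_mat n n" by (simp add: dg_def)

lemma udu_entry:
  assumes U: "U \<in> carrier_mat n n" and i: "i < n" and j: "j < n"
  shows "(U * dg n f * mat_adjoint U) $$ (i,j) = (\<Sum>k<n. U $$ (i,k) * f k * cnj (U $$ (j,k)))"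
proof -
  have 1: "(U * dg n f) $$ (i,k) = U $$ (i,k) * f k" if k: "k < n" for k
  proof -
    have "(U * dg n f) $$ (i,k) = (\<Sum>l<n. U $$ (i,l) * dg n f $$ (l,k))"
      using mult_entry[OF U dg_carrier i k] .
    also have "\<dots> = (\<Sum>l<n. if l = k then U $$ (i,l) * f k else 0)"
      using k by (intro sum.cong) (auto simp: dg_def)
    finally show ?thesis using k by simp
  qed
  have "(U * dg n f * mat_adjoint U) $$ (i,j) = (\<Sum>k<n. (U * dg n f) $$ (i,k) * mat_adjoint U $$ (k,j))"
    using U i j by (intro mult_entry[of _ n n _ n]) auto
  also have "\<dots> = (\<Sum>k<n. U $$ (i,k) * f k * cnj (U $$ (j,k)))"
  proof (rule sum.cong)
    fix k assume "k \<in> {..<n}"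
    hence k: "k < n" by simp
    show "(U * dg n f) $$ (i,k) * mat_adjoint U $$ (k,j) = U $$ (i,k) * f k * cnj (U $$ (j,k))"
      using U j k 1[OF k] by simp
  qed simp
  finally show ?thesis .
qed

lemma sprodc_expand:
  fixes x y :: "complex vec"
  assumes "dim_vec x = dim_vec y"
  shows "x \<bullet>c y = (\<Sum>i<dim_vec y. x $ i * cnj (y $ i))"
  using assms by (simp add: scalar_prod_def lessThan_atLeast0)

lemma sprodc_self_real:
  fixes x :: "complex vec"
  shows "x \<bullet>c x = complex_of_real (\<Sum>i<dim_vec x. (cmod (x $ i))^2)"
proof -
  have "x \<bullet>c x = (\<Sum>i<dim_vec x. x $ i * cnj (x $ i))" by (simp add: sprodc_expand)
  also have "\<dots> = (\<Sum>i<dim_vec x. complex_of_real ((cmod (x $ i))^2))"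
    by (intro sum.cong refl) (metis complex_norm_square)
  finally show ?thesis by simp
qed

lemma assoc3: fixes X Y Z :: "complex mat"
  assumes "X \<in> carrier_mat n n" "Y \<in> carrier_mat n n" "Z \<in> carrier_mat n n"
  shows "X * Y * Z = X * (Y * Z)"
  using assms by (rule assoc_mult_mat)

lemma eq_mat0: fixes X Y :: "complex mat"
  assumes "X \<in> carrier_mat 0 0" "Y \<in> carrier_mat 0 0" shows "X = Y"
  by (rule eq_matI) (use assms in auto)

lemma exists_eigenvalue:
  fixes A :: "complex mat"
  assumes A: "A \<in> carrier_mat (Suc n) (Suc n)"
  shows "\<exists>e. eigenvalue A e"
proof -
  from char_poly_factorized[OF A] obtain as where cp: "char_poly A = (\<Prod>a\<leftarrow>as. [:- a, 1:])" by auto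
  have deg: "degree (char_poly A) = Suc n" using degree_monic_char_poly[OF A] by simp
  show ?thesis
  proof (cases as)
    case Nil
    then show ?thesis using deg cp by simp
  next
    case (Cons e rest)
    have "poly (char_poly A) e = 0" unfolding cp Cons by simp
    thus ?thesis using eigenvalue_root_char_poly[OF A] by blast
  qed
qed

lemma spectral:
  fixes A :: "complex mat"
  assumes "A \<in> carrier_mat n n" "mat_adjoint A = A"
  shows "\<exists>U (\<mu>::nat\<Rightarrow>real). U \<in> carrier_mat n n \<and> mat_adjoint U * U = 1\<^sub>m n \<and> U * mat_adjoint U = 1\<^sub>m n
     \<and> A = U * dg n (\<lambda>i. complex_of_real (\<mu> i)) * mat_adjoint U"
  using assms
proof (induction n arbitrary: A)
  case 0
  have c: "1\<^sub>m 0 * dg 0 (\<lambda>i. complex_of_real 0) * mat_adjoint (1\<^sub>m 0) \<in> carrier_mat 0 0"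
    by (metis adj_carrier dg_carrier mult_carrier_mat one_carrier_mat)
  show ?case
    by (rule exI[of _ "1\<^sub>m 0"], rule exI[of _ "\<lambda>_. 0"]) (use 0 c eq_mat0 in auto)
next
  case (Suc n')
  define n where "n = Suc n'"
  have A: "A \<in> carrier_mat n n" and herm: "mat_adjoint A = A" using Suc.prems n_def by auto
  obtain e where e: "eigenvalue A e" using exists_eigenvalue[OF Suc.prems(1)] by auto
  define v where "v = find_eigenvector A e"
  have ev: "eigenvector A v e" using find_eigenvector[OF A e] v_def by simp
  have v: "v \<in> carrier_vec n" and v0: "v \<noteq> 0\<^sub>v n" and Av: "A *\<^sub>v v = e \<cdot>\<^sub>v v"
    using ev A unfolding eigenvector_def by auto
  interpret cof_vec_space n "TYPE(complex)" .
  define b where "b = basis_completion v"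
  from basis_completion[OF v v0, folded b_def]
  have dist_b: "distinct b" and indep: "\<not> lin_dep (set b)" and bc: "set b \<subseteq> carrier_vec n"
    and hdb: "hd b = v" and len_b: "length b = n" by auto
  from hdb len_b n_def obtain vs where bv: "b = v # vs" by (cases b, auto)
  define ws where "ws = gram_schmidt n b"
  from gram_schmidt_result[OF bc dist_b indep ws_def]
  have wsc: "set ws \<subseteq> carrier_vec n" and orth: "corthogonal ws" and len_ws: "length ws = n"
    by (auto simp: len_b)
  have hdws: "hd ws = v" unfolding ws_def bv using gram_schmidt_hd[OF v] by simp
  have ws0: "ws ! 0 = v" using hdws len_ws n_def by (cases ws) auto
  have wsk: "ws ! k \<in> carrier_vec n" if "k < n" for k using wsc len_ws that by auto
  define r where "r k = Re (ws ! k \<bullet>c ws ! k)" for k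
  have rpos: "r k > 0" and rr: "ws ! k \<bullet>c ws ! k = complex_of_real (r k)" if k: "k < n" for k
  proof -
    have nz: "ws ! k \<bullet>c ws ! k \<noteq> 0" using orth k len_ws unfolding corthogonal_def by auto
    have eq: "ws ! k \<bullet>c ws ! k = complex_of_real (\<Sum>i<dim_vec (ws ! k). (cmod (ws ! k $ i))^2)"
      by (rule sprodc_self_real)
    show "ws ! k \<bullet>c ws ! k = complex_of_real (r k)" unfolding r_def eq by simp
    have "(\<Sum>i<dim_vec (ws ! k). (cmod (ws ! k $ i))^2) \<ge> 0" by (intro sum_nonneg) auto
    moreover have "(\<Sum>i<dim_vec (ws ! k). (cmod (ws ! k $ i))^2) \<noteq> 0" using nz unfolding eq by (metis of_real_0)
    ultimately show "r k > 0" unfolding r_def eq by simp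
  qed
  define c where "c k = complex_of_real (1 / sqrt (r k))" for k
  define W where "W = mat n n (\<lambda>(a,k). c k * ws ! k $ a)"
  have W: "W \<in> carrier_mat n n" unfolding W_def by simp
  have adjW: "mat_adjoint W \<in> carrier_mat n n" using W by simp
  have WW: "mat_adjoint W * W = 1\<^sub>m n"
  proof (rule eq_matI)
    fix k l assume "k < dim_row (1\<^sub>m n)" "l < dim_col (1\<^sub>m n)"
    hence k: "k < n" and l: "l < n" by auto
    have "(mat_adjoint W * W) $$ (k,l) = (\<Sum>a<n. mat_adjoint W $$ (k,a) * W $$ (a,l))"
      using W k l by (intro mult_entry[of _ n n _ n]) auto
    also have "\<dots> = (\<Sum>a<n. c l * cnj (c k) * (ws ! l $ a * cnj (ws ! k $ a)))"
      using W k l by (intro sum.cong refl) (simp add: W_def)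
    also have "\<dots> = c l * cnj (c k) * (\<Sum>a<n. ws ! l $ a * cnj (ws ! k $ a))"
      by (simp add: sum_distrib_left)
    also have "(\<Sum>a<n. ws ! l $ a * cnj (ws ! k $ a)) = ws ! l \<bullet>c ws ! k"
      using wsk[OF k] wsk[OF l] by (simp add: sprodc_expand)
    also have "c l * cnj (c k) * (ws ! l \<bullet>c ws ! k) = 1\<^sub>m n $$ (k,l)"
    proof (cases "k = l")
      case True
      have "c k * cnj (c k) * complex_of_real (r k) = 1"
        using rpos[OF k] unfolding c_def
        by (simp flip: of_real_mult)
      thus ?thesis using True rr[OF k] k by simp
    next
      case False
      hence "ws ! l \<bullet>c ws ! k = 0" using orth k l len_ws unfolding corthogonal_def by auto
      thus ?thesis using False k l by simp
    qed
    finally show "(mat_adjoint W * W) $$ (k,l) = 1\<^sub>m n $$ (k,l)" .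
  qed (use W in auto)
  have WW2: "W * mat_adjoint W = 1\<^sub>m n"
    using mat_mult_left_right_inverse[OF adj_carrier[OF W] W WW] .
  have AW0: "(A * W) $$ (a,0) = e * W $$ (a,0)" if a: "a < n" for a
  proof -
    have n0: "0 < n" using n_def by simp
    have "(A * W) $$ (a,0) = (\<Sum>b<n. A $$ (a,b) * W $$ (b,0))"
      using A W a n0 by (intro mult_entry[of _ n n _ n]) auto
    also have "\<dots> = c 0 * (\<Sum>b<n. A $$ (a,b) * v $ b)"
      unfolding sum_distrib_left by (intro sum.cong refl) (simp add: W_def n0 ws0)
    also have "(\<Sum>b<n. A $$ (a,b) * v $ b) = (A *\<^sub>v v) $ a"
      using A v a by (simp add: mult_mat_vec_def scalar_prod_def lessThan_atLeast0)
    also have "\<dots> = e * v $ a" using Av v a by simp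
    finally show ?thesis using a n0 by (simp add: W_def ws0)
  qed
  define A' where "A' = mat_adjoint W * (A * W)"
  have A': "A' \<in> carrier_mat n n" unfolding A'_def using A W adjW by (metis mult_carrier_mat)
  have A'herm: "mat_adjoint A' = A'"
  proof -
    have "mat_adjoint A' = mat_adjoint (A * W) * mat_adjoint (mat_adjoint W)"
      unfolding A'_def by (rule adj_mult[of _ n n _ n]) (use A W in auto)
    also have "mat_adjoint (A * W) = mat_adjoint W * mat_adjoint A"
      by (rule adj_mult[of _ n n _ n]) (use A W in auto)
    finally show ?thesis unfolding herm A'_def adj_adj using A W adjW by (simp add: assoc3)
  qed
  have A'col: "A' $$ (k,0) = (if k = 0 then e else 0)" if k: "k < n" for k
  proof -
    have n0: "0 < n" using n_def by simp
    have "A' $$ (k,0) = (\<Sum>a<n. mat_adjoint W $$ (k,a) * (A * W) $$ (a,0))"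
      unfolding A'_def using A W k n0 by (intro mult_entry[of _ n n _ n]) auto
    also have "\<dots> = e * (\<Sum>a<n. mat_adjoint W $$ (k,a) * W $$ (a,0))"
      unfolding sum_distrib_left by (intro sum.cong refl) (simp add: AW0)
    also have "(\<Sum>a<n. mat_adjoint W $$ (k,a) * W $$ (a,0)) = (mat_adjoint W * W) $$ (k,0)"
      using W k n0 by (intro mult_entry[symmetric, of _ n n _ n]) auto
    finally show ?thesis using WW k n0 by simp
  qed
  have A'row: "A' $$ (0,k) = (if k = 0 then cnj e else 0)" if k: "k < n" for k
  proof -
    have "A' $$ (0,k) = mat_adjoint A' $$ (0,k)" using A'herm by simp
    also have "\<dots> = cnj (A' $$ (k,0))" using A' k n_def by simp
    finally show ?thesis using A'col[OF k] by simp
  qed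
  have ereal: "cnj e = e" using A'col[of 0] A'row[of 0] n_def by simp
  define A3 where "A3 = mat n' n' (\<lambda>(i,j). A' $$ (Suc i, Suc j))"
  have A3: "A3 \<in> carrier_mat n' n'" unfolding A3_def by simp
  have A3herm: "mat_adjoint A3 = A3"
  proof (rule eq_matI)
    fix i j assume "i < dim_row A3" "j < dim_col A3"
    hence i: "i < n'" and j: "j < n'" using A3 by auto
    have "mat_adjoint A3 $$ (i,j) = cnj (A' $$ (Suc j, Suc i))" using i j by (simp add: A3_def)
    also have "\<dots> = mat_adjoint A' $$ (Suc i, Suc j)" using i j A' n_def by simp
    also have "\<dots> = A3 $$ (i,j)" using i j A'herm by (simp add: A3_def)
    finally show "mat_adjoint A3 $$ (i,j) = A3 $$ (i,j)" .
  qed (use A3 in auto)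
  obtain U3 and \<mu>3 :: "nat \<Rightarrow> real" where U3: "U3 \<in> carrier_mat n' n'"
    and U3U3: "mat_adjoint U3 * U3 = 1\<^sub>m n'"
    and A3eq: "A3 = U3 * dg n' (\<lambda>i. complex_of_real (\<mu>3 i)) * mat_adjoint U3"
    using Suc.IH[OF A3 A3herm] by auto
  define Ub where "Ub = mat n n (\<lambda>(i,j). if i = 0 then (if j = 0 then 1 else 0)
                                         else if j = 0 then 0 else U3 $$ (i - 1, j - 1))"
  have Ub: "Ub \<in> carrier_mat n n" unfolding Ub_def by simp
  define \<mu> where "\<mu> i = (if i = 0 then Re e else \<mu>3 (i - 1))" for i
  have UbUb: "mat_adjoint Ub * Ub = 1\<^sub>m n"
  proof (rule eq_matI)
    fix i j assume "i < dim_row (1\<^sub>m n)" "j < dim_col (1\<^sub>m n)"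
    hence i: "i < n" and j: "j < n" by auto
    have "(mat_adjoint Ub * Ub) $$ (i,j) = (\<Sum>k<n. mat_adjoint Ub $$ (i,k) * Ub $$ (k,j))"
      using Ub i j by (intro mult_entry[of _ n n _ n]) auto
    also have "\<dots> = (\<Sum>k<Suc n'. cnj (Ub $$ (k,i)) * Ub $$ (k,j))"
      using Ub i j n_def by (intro sum.cong) auto
    also have "\<dots> = cnj (Ub $$ (0,i)) * Ub $$ (0,j) + (\<Sum>k<n'. cnj (Ub $$ (Suc k,i)) * Ub $$ (Suc k,j))"
      by (rule sum.lessThan_Suc_shift)
    also have "\<dots> = 1\<^sub>m n $$ (i,j)"
    proof (cases i)
      case 0
      then show ?thesis using i j n_def by (auto simp: Ub_def)
    next
      case (Suc i')
      show ?thesis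
      proof (cases j)
        case 0
        then show ?thesis using i j n_def Suc by (auto simp: Ub_def)
      next
        case (Suc j')
        have "(\<Sum>k<n'. cnj (Ub $$ (Suc k,i)) * Ub $$ (Suc k,j)) = (\<Sum>k<n'. mat_adjoint U3 $$ (i',k) * U3 $$ (k,j'))"
          using i j n_def \<open>i = Suc i'\<close> Suc U3 by (intro sum.cong refl) (auto simp: Ub_def)
        also have "\<dots> = (mat_adjoint U3 * U3) $$ (i',j')"
          using U3 i j n_def \<open>i = Suc i'\<close> Suc by (intro mult_entry[symmetric, of _ n' n' _ n']) auto
        finally show ?thesis using U3U3 i j n_def \<open>i = Suc i'\<close> Suc by (simp add: Ub_def)
      qed
    qed
    finally show "(mat_adjoint Ub * Ub) $$ (i,j) = 1\<^sub>m n $$ (i,j)" .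
  qed (use Ub in auto)
  have UbUb2: "Ub * mat_adjoint Ub = 1\<^sub>m n"
    using mat_mult_left_right_inverse[OF adj_carrier[OF Ub] Ub UbUb] .
  have A'eq: "A' = Ub * dg n (\<lambda>i. complex_of_real (\<mu> i)) * mat_adjoint Ub"
  proof (rule eq_matI)
    fix i j assume "i < dim_row (Ub * dg n (\<lambda>i. complex_of_real (\<mu> i)) * mat_adjoint Ub)"
       "j < dim_col (Ub * dg n (\<lambda>i. complex_of_real (\<mu> i)) * mat_adjoint Ub)"
    hence i: "i < n" and j: "j < n" using Ub by auto
    have "(Ub * dg n (\<lambda>i. complex_of_real (\<mu> i)) * mat_adjoint Ub) $$ (i,j)
        = (\<Sum>k<Suc n'. Ub $$ (i,k) * complex_of_real (\<mu> k) * cnj (Ub $$ (j,k)))"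
      using udu_entry[OF Ub i j] n_def by simp
    also have "\<dots> = Ub $$ (i,0) * complex_of_real (\<mu> 0) * cnj (Ub $$ (j,0))
        + (\<Sum>k<n'. Ub $$ (i,Suc k) * complex_of_real (\<mu> (Suc k)) * cnj (Ub $$ (j,Suc k)))"
      by (rule sum.lessThan_Suc_shift)
    also have "\<dots> = A' $$ (i,j)"
    proof (cases i)
      case 0
      then show ?thesis using i j n_def A'row[OF j] ereal
        by (cases "e") (auto simp: Ub_def \<mu>_def complex_eq_iff)
    next
      case (Suc i')
      show ?thesis
      proof (cases j)
        case 0
        then show ?thesis using i j n_def Suc A'col[OF i] by (auto simp: Ub_def)
      next
        case (Suc j')
        have "(\<Sum>k<n'. Ub $$ (i,Suc k) * complex_of_real (\<mu> (Suc k)) * cnj (Ub $$ (j,Suc k)))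
            = (\<Sum>k<n'. U3 $$ (i',k) * complex_of_real (\<mu>3 k) * cnj (U3 $$ (j',k)))"
          using i j n_def \<open>i = Suc i'\<close> Suc by (intro sum.cong refl) (auto simp: Ub_def \<mu>_def)
        also have "\<dots> = A3 $$ (i',j')"
          unfolding A3eq using U3 i j n_def \<open>i = Suc i'\<close> Suc by (intro udu_entry[symmetric]) auto
        finally show ?thesis using i j n_def \<open>i = Suc i'\<close> Suc by (simp add: Ub_def A3_def)
      qed
    qed
    finally show "A' $$ (i,j) = (Ub * dg n (\<lambda>i. complex_of_real (\<mu> i)) * mat_adjoint Ub) $$ (i,j)" by simp
  qed (use A' Ub in auto)
  define U where "U = W * Ub"
  define D where "D = dg n (\<lambda>i. complex_of_real (\<mu> i))"
  have U: "U \<in> carrier_mat n n" unfolding U_def using W Ub by simp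
  have D: "D \<in> carrier_mat n n" unfolding D_def by simp
  have adjU: "mat_adjoint U = mat_adjoint Ub * mat_adjoint W"
    unfolding U_def by (rule adj_mult[of _ n n _ n]) (use W Ub in auto)
  have adjUb: "mat_adjoint Ub \<in> carrier_mat n n"
    using Ub by auto
  have WUb: "W * Ub \<in> carrier_mat n n" using W Ub by simp
  have "mat_adjoint U * U = mat_adjoint Ub * mat_adjoint W * (W * Ub)" unfolding adjU unfolding U_def ..
  also have "\<dots> = mat_adjoint Ub * (mat_adjoint W * (W * Ub))"
    by (rule assoc3[OF adjUb adjW WUb])
  also have "mat_adjoint W * (W * Ub) = Ub"
    using assoc3[OF adjW W Ub, symmetric] WW left_mult_one_mat[OF Ub] by simp
  finally have UU: "mat_adjoint U * U = 1\<^sub>m n" using UbUb by simp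
  have "U * mat_adjoint U = W * Ub * (mat_adjoint Ub * mat_adjoint W)" unfolding adjU unfolding U_def ..
  also have "\<dots> = W * (Ub * (mat_adjoint Ub * mat_adjoint W))"
    by (rule assoc3[OF W Ub mult_carrier_mat[OF adjUb adjW]])
  also have "Ub * (mat_adjoint Ub * mat_adjoint W) = mat_adjoint W"
    using assoc3[OF Ub adjUb adjW, symmetric] UbUb2 left_mult_one_mat[OF adjW] by simp
  finally have UU2: "U * mat_adjoint U = 1\<^sub>m n" using WW2 by simp
  have UD: "Ub * D \<in> carrier_mat n n" using Ub D by simp
  have "U * D * mat_adjoint U = W * Ub * D * (mat_adjoint Ub * mat_adjoint W)" unfolding adjU unfolding U_def ..
  also have "\<dots> = W * (Ub * D) * (mat_adjoint Ub * mat_adjoint W)"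
    using assoc3[OF W Ub D] by simp
  also have "\<dots> = W * ((Ub * D) * (mat_adjoint Ub * mat_adjoint W))"
    by (rule assoc3[OF W UD mult_carrier_mat[OF adjUb adjW]])
  also have "(Ub * D) * (mat_adjoint Ub * mat_adjoint W) = A' * mat_adjoint W"
    unfolding A'eq D_def[symmetric] using assoc3[OF UD adjUb adjW] by simp
  also have "W * (A' * mat_adjoint W) = W * (mat_adjoint W * (A * W) * mat_adjoint W)"
    unfolding A'_def ..
  also have "mat_adjoint W * (A * W) * mat_adjoint W = mat_adjoint W * (A * (W * mat_adjoint W))"
    using assoc3[OF adjW mult_carrier_mat[OF A W] adjW] assoc3[OF A W adjW] by simp
  also have "A * (W * mat_adjoint W) = A" using WW2 right_mult_one_mat[OF A] by simp
  also have "W * (mat_adjoint W * A) = A"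
    using assoc3[OF W adjW A, symmetric] WW2 left_mult_one_mat[OF A] by simp
  finally show ?case using U UU UU2 n_def D_def by metis
qed

lemma sum_lessThan_plus: "(\<Sum>k<m+b. f k) = (\<Sum>k<m. f k) + (\<Sum>k<b. f (m+k))"
  for f :: "nat \<Rightarrow> 'a::comm_monoid_add"
  by (induction b) (simp_all add: add.assoc)

lemma sum_split_prod: "(\<Sum>k<a*b. f k) = (\<Sum>k1<a. \<Sum>k2<b. f (k1*b + k2))"
  for f :: "nat \<Rightarrow> 'a::comm_monoid_add"
proof (induction a)
  case 0 then show ?case by simp
next
  case (Suc a)
  have "(\<Sum>k<Suc a * b. f k) = (\<Sum>k<a*b + b. f k)" by (simp add: add.commute)
  also have "\<dots> = (\<Sum>k<a*b. f k) + (\<Sum>k<b. f (a*b+k))" by (rule sum_lessThan_plus)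
  finally show ?case using Suc.IH by simp
qed

lemma divmod_aux:
  fixes k1 k2 b :: nat
  assumes "k2 < b"
  shows "(k1*b + k2) div b = k1" "(k1*b + k2) mod b = k2"
  using assms by auto

lemma bound_aux:
  fixes k1 k2 a b :: nat
  assumes "k1 < a" "k2 < b"
  shows "k1*b + k2 < a*b"
proof -
  have "(k1+1)*b \<le> a*b" using assms(1) by (intro mult_le_mono1) simp
  thus ?thesis using assms(2) by simp
qed

lemma kron_dims[simp]: "dim_row (kron A B) = dim_row A * dim_row B" "dim_col (kron A B) = dim_col A * dim_col B"
  by (simp_all add: kron_def)

lemma kron_carrier: "A \<in> carrier_mat a1 a2 \<Longrightarrow> B \<in> carrier_mat b1 b2 \<Longrightarrow> kron A B \<in> carrier_mat (a1*b1) (a2*b2)"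
  by (metis carrier_matD(1) carrier_matD(2) carrier_matI kron_dims(1) kron_dims(2))

lemma kron_index:
  assumes "i < dim_row A * dim_row B" "j < dim_col A * dim_col B"
  shows "kron A B $$ (i,j) = A $$ (i div dim_row B, j div dim_col B) * B $$ (i mod dim_row B, j mod dim_col B)"
  using assms by (simp add: kron_def)

lemma kron_index2:
  assumes "k1 < dim_row A" "k2 < dim_row B" "l1 < dim_col A" "l2 < dim_col B"
  shows "kron A B $$ (k1 * dim_row B + k2, l1 * dim_col B + l2) = A $$ (k1,l1) * B $$ (k2,l2)"
proof -
  have "k1 * dim_row B + k2 < dim_row A * dim_row B" using bound_aux assms by blast
  moreover have "l1 * dim_col B + l2 < dim_col A * dim_col B" using bound_aux assms by blast
  ultimately show ?thesis using assms by (simp add: kron_index divmod_aux)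
qed

lemma kron_mult:
  assumes A: "A \<in> carrier_mat ra ca" and B: "B \<in> carrier_mat rb cb"
    and C: "C \<in> carrier_mat ca cc" and D: "D \<in> carrier_mat cb cd"
  shows "kron A B * kron C D = kron (A * C) (B * D)"
proof (rule eq_matI)
  fix i j assume "i < dim_row (kron (A * C) (B * D))" "j < dim_col (kron (A * C) (B * D))"
  hence i: "i < ra * rb" and j: "j < cc * cd" using A B C D by auto
  have rb: "rb > 0" using i by (cases rb) auto
  have cd: "cd > 0" using j by (cases cd) auto
  have i1: "i div rb < ra" using i rb by (simp add: less_mult_imp_div_less)
  have i2: "i mod rb < rb" using rb by simp
  have j1: "j div cd < cc" using j cd by (simp add: less_mult_imp_div_less)
  have j2: "j mod cd < cd" using cd by simp
  have "(kron A B * kron C D) $$ (i,j) = (\<Sum>k<ca*cb. kron A B $$ (i,k) * kron C D $$ (k,j))"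
    by (rule mult_entry[OF kron_carrier[OF A B] kron_carrier[OF C D] i j])
  also have "\<dots> = (\<Sum>k1<ca. \<Sum>k2<cb. kron A B $$ (i,k1*cb+k2) * kron C D $$ (k1*cb+k2,j))"
    by (rule sum_split_prod)
  also have "\<dots> = (\<Sum>k1<ca. \<Sum>k2<cb. (A $$ (i div rb, k1) * C $$ (k1, j div cd)) * (B $$ (i mod rb, k2) * D $$ (k2, j mod cd)))"
  proof (intro sum.cong refl)
    fix k1 k2 assume k1: "k1 \<in> {..<ca}" and k2: "k2 \<in> {..<cb}"
    have b1: "k1*cb+k2 < ca*cb" using bound_aux k1 k2 by simp
    have "kron A B $$ (i,k1*cb+k2) = A $$ (i div rb, k1) * B $$ (i mod rb, k2)"
      using A B i b1 k2 by (simp add: kron_index divmod_aux)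
    moreover have "kron C D $$ (k1*cb+k2,j) = C $$ (k1, j div cd) * D $$ (k2, j mod cd)"
      using C D j b1 k2 by (simp add: kron_index divmod_aux)
    ultimately show "kron A B $$ (i,k1*cb+k2) * kron C D $$ (k1*cb+k2,j)
      = (A $$ (i div rb, k1) * C $$ (k1, j div cd)) * (B $$ (i mod rb, k2) * D $$ (k2, j mod cd))"
      by (simp add: ac_simps)
  qed
  also have "\<dots> = (\<Sum>k1<ca. A $$ (i div rb, k1) * C $$ (k1, j div cd)) * (\<Sum>k2<cb. B $$ (i mod rb, k2) * D $$ (k2, j mod cd))"
    by (simp add: sum_product)
  also have "\<dots> = (A * C) $$ (i div rb, j div cd) * (B * D) $$ (i mod rb, j mod cd)"
    using mult_entry[OF A C i1 j1] mult_entry[OF B D i2 j2] by simp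
  also have "\<dots> = kron (A * C) (B * D) $$ (i,j)"
    using A B C D i j by (simp add: kron_index)
  finally show "(kron A B * kron C D) $$ (i,j) = kron (A * C) (B * D) $$ (i,j)" .
qed (use A B C D in auto)

lemma kron_trace:
  assumes A: "A \<in> carrier_mat a a" and B: "B \<in> carrier_mat b b"
  shows "mtrace (kron A B) = mtrace A * mtrace B"
proof -
  have "mtrace (kron A B) = (\<Sum>k<a*b. kron A B $$ (k,k))" using A B by (simp add: mtrace_def)
  also have "\<dots> = (\<Sum>k1<a. \<Sum>k2<b. kron A B $$ (k1*b+k2,k1*b+k2))" by (rule sum_split_prod)
  also have "\<dots> = (\<Sum>k1<a. \<Sum>k2<b. A $$ (k1,k1) * B $$ (k2,k2))"
  proof (intro sum.cong refl)
    fix k1 k2 assume "k1 \<in> {..<a}" "k2 \<in> {..<b}"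
    thus "kron A B $$ (k1*b+k2,k1*b+k2) = A $$ (k1,k1) * B $$ (k2,k2)"
      using kron_index2[of k1 A k2 B k1 k2] A B by simp
  qed
  also have "\<dots> = mtrace A * mtrace B" using A B by (simp add: mtrace_def sum_product)
  finally show ?thesis .
qed

lemma kron_adj: "mat_adjoint (kron A B) = kron (mat_adjoint A) (mat_adjoint B)"
proof (rule eq_matI)
  fix i j assume "i < dim_row (kron (mat_adjoint A) (mat_adjoint B))" "j < dim_col (kron (mat_adjoint A) (mat_adjoint B))"
  hence i: "i < dim_col A * dim_col B" and j: "j < dim_row A * dim_row B" by auto
  have cb: "dim_col B > 0" using i by (cases "dim_col B") auto
  have rb: "dim_row B > 0" using j by (cases "dim_row B") auto
  have i1: "i div dim_col B < dim_col A" using i cb by (simp add: less_mult_imp_div_less)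
  have j1: "j div dim_row B < dim_row A" using j rb by (simp add: less_mult_imp_div_less)
  show "mat_adjoint (kron A B) $$ (i,j) = kron (mat_adjoint A) (mat_adjoint B) $$ (i,j)"
    using i j i1 j1 cb rb by (simp add: kron_index)
qed auto

fun kchain :: "(nat \<Rightarrow> complex mat) \<Rightarrow> nat \<Rightarrow> complex mat" where
  "kchain f 0 = 1\<^sub>m 1"
| "kchain f (Suc n) = kron (kchain f n) (f n)"

lemma kpow_kchain: "kpow A n = kchain (\<lambda>_. A) n"
  by (induction n) auto

lemma kchain_carrier: "(\<And>t. t < n \<Longrightarrow> f t \<in> carrier_mat d d) \<Longrightarrow> kchain f n \<in> carrier_mat (d^n) (d^n)"
proof (induction n)
  case 0 then show ?case by simp
next
  case (Suc n)
  have "kchain f n \<in> carrier_mat (d^n) (d^n)" using Suc by auto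
  moreover have "f n \<in> carrier_mat d d" using Suc by auto
  ultimately have "kron (kchain f n) (f n) \<in> carrier_mat (d^n*d) (d^n*d)" by (rule kron_carrier)
  thus ?case by (simp add: mult.commute)
qed

lemma kchain_mult:
  assumes "\<And>t. t < n \<Longrightarrow> f t \<in> carrier_mat d d" "\<And>t. t < n \<Longrightarrow> g t \<in> carrier_mat d d"
  shows "kchain f n * kchain g n = kchain (\<lambda>t. f t * g t) n"
  using assms
proof (induction n)
  case 0 then show ?case by simp
next
  case (Suc n)
  have f: "kchain f n \<in> carrier_mat (d^n) (d^n)" using Suc.prems by (intro kchain_carrier) auto
  have g: "kchain g n \<in> carrier_mat (d^n) (d^n)" using Suc.prems by (intro kchain_carrier) auto
  have "kchain f (Suc n) * kchain g (Suc n) = kron (kchain f n * kchain g n) (f n * g n)"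
    using kron_mult[OF f _ g, of "f n" d d "g n" d] Suc.prems by simp
  thus ?case using Suc by simp
qed

lemma kchain_trace:
  assumes "\<And>t. t < n \<Longrightarrow> f t \<in> carrier_mat d d"
  shows "mtrace (kchain f n) = (\<Prod>t<n. mtrace (f t))"
  using assms
proof (induction n)
  case 0 then show ?case by (simp add: mtrace_def)
next
  case (Suc n)
  have f: "kchain f n \<in> carrier_mat (d^n) (d^n)" using Suc.prems by (intro kchain_carrier) auto
  show ?case using kron_trace[OF f, of "f n" d] Suc by simp
qed

lemma kchain_adj: "mat_adjoint (kchain f n) = kchain (\<lambda>t. mat_adjoint (f t)) n"
proof (induction n)
  case 0
  show ?case by (rule eq_matI) auto
next
  case (Suc n) then show ?case by (simp add: kron_adj)
qed

definition Em :: "nat \<Rightarrow> nat \<Rightarrow> nat \<Rightarrow> complex mat" where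
  "Em d x y = mat d d (\<lambda>(a,b). if a = x \<and> b = y then 1 else 0)"

lemma Em_carrier[simp]: "Em d x y \<in> carrier_mat d d" by (simp add: Em_def)
lemma Em_dims[simp]: "dim_row (Em d x y) = d" "dim_col (Em d x y) = d" by (simp_all add: Em_def)
lemma msum_dims[simp]: "dim_row (mat N N f) = N" "dim_col (mat N N f) = N" by simp_all

lemma Em_trace:
  assumes M: "M \<in> carrier_mat d d" and x: "x < d" and y: "y < d"
  shows "mtrace (Em d x y * M) = M $$ (y,x)"
proof -
  have "mtrace (Em d x y * M) = (\<Sum>a<d. (Em d x y * M) $$ (a,a))" using M by (simp add: mtrace_def)
  also have "\<dots> = (\<Sum>a<d. if a = x then M $$ (y,a) else 0)"
  proof (intro sum.cong refl)
    fix a assume a: "a \<in> {..<d}"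
    have "(Em d x y * M) $$ (a,a) = (\<Sum>b<d. Em d x y $$ (a,b) * M $$ (b,a))"
      using a by (intro mult_entry[OF Em_carrier M]) auto
    also have "\<dots> = (\<Sum>b<d. if b = y then (if a = x then M $$ (y,a) else 0) else 0)"
      using a by (intro sum.cong refl) (auto simp: Em_def)
    also have "\<dots> = (if a = x then M $$ (y,a) else 0)" using y by simp
    finally show "(Em d x y * M) $$ (a,a) = (if a = x then M $$ (y,a) else 0)" .
  qed
  also have "\<dots> = M $$ (y,x)" using x by simp
  finally show ?thesis .
qed

lemma Em_mult:
  assumes "x < d" "y < d" "z < d" "w < d"
  shows "Em d x y * Em d z w = (if y = z then Em d x w else 0\<^sub>m d d)"
proof (rule eq_matI)
  fix a b assume "a < dim_row (if y = z then Em d x w else 0\<^sub>m d d)" "b < dim_col (if y = z then Em d x w else 0\<^sub>m d d)"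
  hence a: "a < d" and b: "b < d" by (auto split: if_splits simp: Em_def)
  have "(Em d x y * Em d z w) $$ (a,b) = (\<Sum>k<d. Em d x y $$ (a,k) * Em d z w $$ (k,b))"
    using a b by (intro mult_entry[OF Em_carrier Em_carrier]) auto
  also have "\<dots> = (\<Sum>k<d. if k = y then (if a = x \<and> y = z \<and> b = w then 1 else 0) else 0)"
    using a b by (intro sum.cong refl) (auto simp: Em_def)
  also have "\<dots> = (if a = x \<and> y = z \<and> b = w then 1 else 0)" using assms by simp
  also have "\<dots> = (if y = z then Em d x w else 0\<^sub>m d d) $$ (a,b)" using a b by (auto simp: Em_def)
  finally show "(Em d x y * Em d z w) $$ (a,b) = (if y = z then Em d x w else 0\<^sub>m d d) $$ (a,b)" .
qed (auto simp: Em_def)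

lemma Em_adj: "mat_adjoint (Em d x y) = Em d y x"
  by (rule eq_matI) (auto simp: Em_def)

lemma trace_smult: "M \<in> carrier_mat N N \<Longrightarrow> mtrace (k \<cdot>\<^sub>m M) = k * mtrace M"
  by (simp add: mtrace_def sum_distrib_left)

lemma trace_zero: "mtrace (0\<^sub>m d d) = 0" by (simp add: mtrace_def)

definition msum :: "nat \<Rightarrow> ('i \<Rightarrow> complex mat) \<Rightarrow> 'i set \<Rightarrow> complex mat" where
  "msum N F S = mat N N (\<lambda>(a,b). \<Sum>s\<in>S. F s $$ (a,b))"

lemma msum_carrier[simp]: "msum N F S \<in> carrier_mat N N" by (simp add: msum_def)
lemma msum_dim[simp]: "dim_row (msum N F S) = N" "dim_col (msum N F S) = N" by (simp_all add: msum_def)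

lemma msum_mult_left:
  assumes A: "A \<in> carrier_mat N N" and F: "\<And>s. s \<in> S \<Longrightarrow> F s \<in> carrier_mat N N"
  shows "A * msum N F S = msum N (\<lambda>s. A * F s) S"
proof (rule eq_matI)
  fix a b assume "a < dim_row (msum N (\<lambda>s. A * F s) S)" "b < dim_col (msum N (\<lambda>s. A * F s) S)"
  hence a: "a < N" and b: "b < N" by (auto simp: msum_def)
  have "(A * msum N F S) $$ (a,b) = (\<Sum>k<N. A $$ (a,k) * msum N F S $$ (k,b))"
    using a b by (intro mult_entry[OF A msum_carrier]) auto
  also have "\<dots> = (\<Sum>k<N. \<Sum>s\<in>S. A $$ (a,k) * F s $$ (k,b))"
    using b by (intro sum.cong refl) (auto simp: msum_def sum_distrib_left)
  also have "\<dots> = (\<Sum>s\<in>S. \<Sum>k<N. A $$ (a,k) * F s $$ (k,b))" by (rule sum.swap)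
  also have "\<dots> = (\<Sum>s\<in>S. (A * F s) $$ (a,b))"
    using a b by (intro sum.cong refl mult_entry[OF A F, symmetric]) auto
  also have "\<dots> = msum N (\<lambda>s. A * F s) S $$ (a,b)" using a b by (simp add: msum_def)
  finally show "(A * msum N F S) $$ (a,b) = msum N (\<lambda>s. A * F s) S $$ (a,b)" .
qed (use A in \<open>auto simp: msum_def\<close>)

lemma msum_mult_right:
  assumes A: "A \<in> carrier_mat N N" and F: "\<And>s. s \<in> S \<Longrightarrow> F s \<in> carrier_mat N N"
  shows "msum N F S * A = msum N (\<lambda>s. F s * A) S"
proof (rule eq_matI)
  fix a b assume "a < dim_row (msum N (\<lambda>s. F s * A) S)" "b < dim_col (msum N (\<lambda>s. F s * A) S)"
  hence a: "a < N" and b: "b < N" by (auto simp: msum_def)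
  have "(msum N F S * A) $$ (a,b) = (\<Sum>k<N. msum N F S $$ (a,k) * A $$ (k,b))"
    using a b by (intro mult_entry[OF msum_carrier A]) auto
  also have "\<dots> = (\<Sum>k<N. \<Sum>s\<in>S. F s $$ (a,k) * A $$ (k,b))"
    using a by (intro sum.cong refl) (auto simp: msum_def sum_distrib_right)
  also have "\<dots> = (\<Sum>s\<in>S. \<Sum>k<N. F s $$ (a,k) * A $$ (k,b))" by (rule sum.swap)
  also have "\<dots> = (\<Sum>s\<in>S. (F s * A) $$ (a,b))"
    using a b by (intro sum.cong refl mult_entry[OF F A, symmetric]) auto
  also have "\<dots> = msum N (\<lambda>s. F s * A) S $$ (a,b)" using a b by (simp add: msum_def)
  finally show "(msum N F S * A) $$ (a,b) = msum N (\<lambda>s. F s * A) S $$ (a,b)" .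
qed (use A in \<open>auto simp: msum_def\<close>)

lemma msum_trace:
  assumes F: "\<And>s. s \<in> S \<Longrightarrow> F s \<in> carrier_mat N N"
  shows "mtrace (msum N F S) = (\<Sum>s\<in>S. mtrace (F s))"
proof -
  have "mtrace (msum N F S) = (\<Sum>a<N. \<Sum>s\<in>S. F s $$ (a,a))" by (simp add: mtrace_def msum_def)
  also have "\<dots> = (\<Sum>s\<in>S. \<Sum>a<N. F s $$ (a,a))" by (rule sum.swap)
  also have "\<dots> = (\<Sum>s\<in>S. mtrace (F s))" using F by (intro sum.cong refl) (auto simp: mtrace_def)
  finally show ?thesis .
qed

lemma msum_adj:
  assumes F: "\<And>s. s \<in> S \<Longrightarrow> F s \<in> carrier_mat N N"
  shows "mat_adjoint (msum N F S) = msum N (\<lambda>s. mat_adjoint (F s)) S"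
proof (rule eq_matI)
  fix a b assume "a < dim_row (msum N (\<lambda>s. mat_adjoint (F s)) S)" "b < dim_col (msum N (\<lambda>s. mat_adjoint (F s)) S)"
  hence a: "a < N" and b: "b < N" by (auto simp: msum_def)
  show "mat_adjoint (msum N F S) $$ (a,b) = msum N (\<lambda>s. mat_adjoint (F s)) S $$ (a,b)"
  proof -
    have "mat_adjoint (msum N F S) $$ (a,b) = (\<Sum>s\<in>S. cnj (F s $$ (b,a)))"
      using a b by (simp add: msum_def)
    also have "\<dots> = (\<Sum>s\<in>S. mat_adjoint (F s) $$ (a,b))"
    proof (intro sum.cong refl)
      fix s assume "s \<in> S"
      hence "F s \<in> carrier_mat N N" by (rule F)
      thus "cnj (F s $$ (b,a)) = mat_adjoint (F s) $$ (a,b)" using a b by simp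
    qed
    finally show ?thesis using a b by (simp add: msum_def)
  qed
qed (auto simp: msum_def)

definition ee :: "nat \<Rightarrow> nat \<Rightarrow> nat \<Rightarrow> nat \<Rightarrow> nat \<Rightarrow> complex mat" where
  "ee d i x y t = (if t = i then Em d x y else 1\<^sub>m d)"

definition KK :: "nat \<Rightarrow> nat \<Rightarrow> nat \<Rightarrow> nat \<Rightarrow> nat \<Rightarrow> complex mat" where
  "KK d n i x y = kron (kchain (ee d i x y) n) (Em d y x)"

definition Obs :: "nat \<Rightarrow> nat \<Rightarrow> complex mat" where
  "Obs d n = msum (d^n*d) (\<lambda>(i,x,y). (1 / of_nat n) \<cdot>\<^sub>m KK d n i x y) ({..<n} \<times> {..<d} \<times> {..<d})"

definition Xm :: "nat \<Rightarrow> nat \<Rightarrow> complex mat \<Rightarrow> complex vec \<Rightarrow> complex mat" where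
  "Xm d n \<rho> \<psi> = kron (kchain (\<lambda>_. \<rho>) n) (proj \<psi>)"

lemma ee_carrier[simp]: "ee d i x y t \<in> carrier_mat d d" by (simp add: ee_def)

lemma KK_carrier[simp]: "KK d n i x y \<in> carrier_mat (d^n*d) (d^n*d)"
  unfolding KK_def by (intro kron_carrier kchain_carrier) auto

lemma proj_carrier: "\<psi> \<in> carrier_vec d \<Longrightarrow> proj \<psi> \<in> carrier_mat d d"
  by (simp add: proj_def carrier_vecD)

lemma Xm_carrier: "\<rho> \<in> carrier_mat d d \<Longrightarrow> \<psi> \<in> carrier_vec d \<Longrightarrow> Xm d n \<rho> \<psi> \<in> carrier_mat (d^n*d) (d^n*d)"
  unfolding Xm_def by (intro kron_carrier kchain_carrier proj_carrier) auto

lemma Obs_carrier[simp]: "Obs d n \<in> carrier_mat (d^n*d) (d^n*d)" by (simp add: Obs_def)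

lemma sum_if_eq: "i < n \<Longrightarrow> (\<Sum>j<n. if j = i then A else B) = A + (of_nat n - 1) * (B :: complex)"
proof -
  assume i: "i < n"
  have "(\<Sum>j<n. if j = i then A else B) = A + (\<Sum>j\<in>{..<n} - {i}. B)"
    using i by (simp add: sum.delta_remove)
  also have "(\<Sum>j\<in>{..<n} - {i}. B) = of_nat (n - 1) * B" using i by simp
  also have "of_nat (n - 1) = (of_nat n - 1 :: complex)" using i by (simp add: of_nat_diff)
  finally show ?thesis .
qed

context
  fixes d n :: nat and \<rho> :: "complex mat" and \<psi> :: "complex vec" and lam :: complex
  assumes \<rho>: "\<rho> \<in> carrier_mat d d" and \<psi>: "\<psi> \<in> carrier_vec d"
    and tr\<rho>: "mtrace \<rho> = 1" and eig: "\<rho> *\<^sub>v \<psi> = lam \<cdot>\<^sub>v \<psi>"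
    and nrm: "(\<Sum>a<d. \<psi> $ a * cnj (\<psi> $ a)) = 1"
begin

lemma eeR: "ee d i x y t * \<rho> \<in> carrier_mat d d" using mult_carrier_mat[OF ee_carrier \<rho>] .
lemma eeee: "ee d i x y t * ee d j z w t \<in> carrier_mat d d" using mult_carrier_mat[OF ee_carrier ee_carrier] .
lemma eeeeR: "ee d i x y t * ee d j z w t * \<rho> \<in> carrier_mat d d" using mult_carrier_mat[OF eeee \<rho>] .

lemma P: "proj \<psi> \<in> carrier_mat d d" using \<psi> by (rule proj_carrier)

lemma proj_idx: "a < d \<Longrightarrow> b < d \<Longrightarrow> proj \<psi> $$ (a,b) = \<psi> $ a * cnj (\<psi> $ b)"
  using \<psi> by (simp add: proj_def)

lemma rho_psi: "y < d \<Longrightarrow> (\<Sum>x<d. \<rho> $$ (y,x) * \<psi> $ x) = lam * \<psi> $ y"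
proof -
  assume y: "y < d"
  have "(\<rho> *\<^sub>v \<psi>) $ y = (\<Sum>x<d. \<rho> $$ (y,x) * \<psi> $ x)"
    using \<rho> \<psi> y by (simp add: scalar_prod_def lessThan_atLeast0)
  thus ?thesis using eig y \<psi> by simp
qed

lemma kchain_rho: "kchain (\<lambda>_. \<rho>) n \<in> carrier_mat (d^n) (d^n)"
  by (rule kchain_carrier) (use \<rho> eeR eeeeR eeee in auto)

lemma trX: "mtrace (Xm d n \<rho> \<psi>) = 1"
proof -
  have "mtrace (Xm d n \<rho> \<psi>) = mtrace (kchain (\<lambda>_. \<rho>) n) * mtrace (proj \<psi>)"
    unfolding Xm_def by (rule kron_trace[OF kchain_rho P])
  also have "mtrace (kchain (\<lambda>_. \<rho>) n) = 1"
    using kchain_trace[of n "\<lambda>_. \<rho>" d] \<rho> tr\<rho> by simp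
  also have "mtrace (proj \<psi>) = (\<Sum>a<d. \<psi> $ a * cnj (\<psi> $ a))"
    using P by (simp add: mtrace_def proj_idx)
  finally show ?thesis using nrm by simp
qed

lemma trK:
  assumes i: "i < n" and x: "x < d" and y: "y < d"
  shows "mtrace (KK d n i x y * Xm d n \<rho> \<psi>) = \<rho> $$ (y,x) * (\<psi> $ x * cnj (\<psi> $ y))"
proof -
  have c1: "kchain (ee d i x y) n \<in> carrier_mat (d^n) (d^n)" by (rule kchain_carrier) auto
  have c2: "kchain (\<lambda>t. ee d i x y t * \<rho>) n \<in> carrier_mat (d^n) (d^n)"
    by (rule kchain_carrier) (use \<rho> eeR eeeeR eeee in auto)
  have "KK d n i x y * Xm d n \<rho> \<psi> = kron (kchain (ee d i x y) n * kchain (\<lambda>_. \<rho>) n) (Em d y x * proj \<psi>)"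
    unfolding KK_def Xm_def by (rule kron_mult[OF c1 Em_carrier kchain_rho P])
  also have "kchain (ee d i x y) n * kchain (\<lambda>_. \<rho>) n = kchain (\<lambda>t. ee d i x y t * \<rho>) n"
    by (rule kchain_mult[where d=d]) (use \<rho> eeR eeeeR eeee in auto)
  finally have "mtrace (KK d n i x y * Xm d n \<rho> \<psi>) = mtrace (kchain (\<lambda>t. ee d i x y t * \<rho>) n) * mtrace (Em d y x * proj \<psi>)"
    using kron_trace[OF c2 mult_carrier_mat[OF Em_carrier P]] by simp
  also have "mtrace (Em d y x * proj \<psi>) = \<psi> $ x * cnj (\<psi> $ y)"
    using Em_trace[OF P y x] proj_idx x y by simp
  also have "mtrace (kchain (\<lambda>t. ee d i x y t * \<rho>) n) = (\<Prod>t<n. mtrace (ee d i x y t * \<rho>))"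
    by (rule kchain_trace[where d=d]) (use \<rho> eeR eeeeR eeee in auto)
  also have "\<dots> = (\<Prod>t<n. if t = i then \<rho> $$ (y,x) else 1)"
  proof (intro prod.cong refl)
    fix t assume "t \<in> {..<n}"
    show "mtrace (ee d i x y t * \<rho>) = (if t = i then \<rho> $$ (y,x) else 1)"
      using Em_trace[OF \<rho> x y] tr\<rho> left_mult_one_mat[OF \<rho>] by (simp add: ee_def)
  qed
  also have "\<dots> = \<rho> $$ (y,x)" using i by simp
  finally show ?thesis .
qed

lemma trKK:
  assumes i: "i < n" and j: "j < n" and x: "x < d" and y: "y < d" and z: "z < d" and w: "w < d"
  shows "mtrace (KK d n i x y * KK d n j z w * Xm d n \<rho> \<psi>) =
    (if i = j then (if y = z then \<rho> $$ (w,x) else 0) else \<rho> $$ (y,x) * \<rho> $$ (w,z)) *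
    (if x = w then \<psi> $ z * cnj (\<psi> $ y) else 0)"
proof -
  have c1: "kchain (ee d i x y) n \<in> carrier_mat (d^n) (d^n)" by (rule kchain_carrier) auto
  have c1': "kchain (ee d j z w) n \<in> carrier_mat (d^n) (d^n)" by (rule kchain_carrier) auto
  have c12: "kchain (\<lambda>t. ee d i x y t * ee d j z w t) n \<in> carrier_mat (d^n) (d^n)"
    by (rule kchain_carrier) (use eeee in auto)
  have c3: "kchain (\<lambda>t. ee d i x y t * ee d j z w t * \<rho>) n \<in> carrier_mat (d^n) (d^n)"
    by (rule kchain_carrier) (use \<rho> eeR eeeeR eeee in auto)
  have EE: "Em d y x * Em d w z \<in> carrier_mat d d" using mult_carrier_mat[OF Em_carrier Em_carrier] .
  have "KK d n i x y * KK d n j z w = kron (kchain (ee d i x y) n * kchain (ee d j z w) n) (Em d y x * Em d w z)"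
    unfolding KK_def by (rule kron_mult[OF c1 Em_carrier c1' Em_carrier])
  also have "kchain (ee d i x y) n * kchain (ee d j z w) n = kchain (\<lambda>t. ee d i x y t * ee d j z w t) n"
    by (rule kchain_mult[where d=d]) auto
  finally have KK2: "KK d n i x y * KK d n j z w = kron (kchain (\<lambda>t. ee d i x y t * ee d j z w t) n) (Em d y x * Em d w z)" .
  have "KK d n i x y * KK d n j z w * Xm d n \<rho> \<psi> = kron (kchain (\<lambda>t. ee d i x y t * ee d j z w t) n * kchain (\<lambda>_. \<rho>) n) (Em d y x * Em d w z * proj \<psi>)"
    unfolding KK2 Xm_def by (rule kron_mult[OF c12 EE kchain_rho P])
  also have "kchain (\<lambda>t. ee d i x y t * ee d j z w t) n * kchain (\<lambda>_. \<rho>) n = kchain (\<lambda>t. ee d i x y t * ee d j z w t * \<rho>) n"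
    by (rule kchain_mult[where d=d]) (use \<rho> eeR eeeeR eeee in auto)
  finally have "mtrace (KK d n i x y * KK d n j z w * Xm d n \<rho> \<psi>) =
     mtrace (kchain (\<lambda>t. ee d i x y t * ee d j z w t * \<rho>) n) * mtrace (Em d y x * Em d w z * proj \<psi>)"
    using kron_trace[OF c3 mult_carrier_mat[OF EE P]] by simp
  also have "mtrace (Em d y x * Em d w z * proj \<psi>) = (if x = w then \<psi> $ z * cnj (\<psi> $ y) else 0)"
  proof (cases "x = w")
    case True
    then show ?thesis using Em_mult[OF y x w z] Em_trace[OF P y z] proj_idx z y by simp
  next
    case False
    then show ?thesis using Em_mult[OF y x w z] P by (simp add: trace_zero)
  qed
  also have "mtrace (kchain (\<lambda>t. ee d i x y t * ee d j z w t * \<rho>) n) = (\<Prod>t<n. mtrace (ee d i x y t * ee d j z w t * \<rho>))"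
    by (rule kchain_trace[where d=d]) (use \<rho> eeR eeeeR eeee in auto)
  also have "\<dots> = (if i = j then (if y = z then \<rho> $$ (w,x) else 0) else \<rho> $$ (y,x) * \<rho> $$ (w,z))"
  proof (cases "i = j")
    case True
    have "(\<Prod>t<n. mtrace (ee d i x y t * ee d j z w t * \<rho>)) = (\<Prod>t<n. if t = i then (if y = z then \<rho> $$ (w,x) else 0) else 1)"
    proof (intro prod.cong refl)
      fix t assume "t \<in> {..<n}"
      show "mtrace (ee d i x y t * ee d j z w t * \<rho>) = (if t = i then (if y = z then \<rho> $$ (w,x) else 0) else 1)"
      proof (cases "t = i")
        case True
        then show ?thesis using \<open>i = j\<close> Em_mult[OF x y z w] Em_trace[OF \<rho> x w] \<rho>
          by (simp add: ee_def trace_zero)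
      next
        case False
        then show ?thesis using \<open>i = j\<close> tr\<rho> left_mult_one_mat[OF \<rho>] left_mult_one_mat[OF one_carrier_mat[of d]]
          by (simp add: ee_def)
      qed
    qed
    also have "\<dots> = (if y = z then \<rho> $$ (w,x) else 0)" using i by simp
    finally show ?thesis using True by simp
  next
    case False
    have "(\<Prod>t<n. mtrace (ee d i x y t * ee d j z w t * \<rho>)) = (\<Prod>t<n. if t = i then \<rho> $$ (y,x) else (if t = j then \<rho> $$ (w,z) else 1))"
    proof (intro prod.cong refl)
      fix t assume "t \<in> {..<n}"
      show "mtrace (ee d i x y t * ee d j z w t * \<rho>) = (if t = i then \<rho> $$ (y,x) else (if t = j then \<rho> $$ (w,z) else 1))"
        using False Em_trace[OF \<rho> x y] Em_trace[OF \<rho> z w] tr\<rho> left_mult_one_mat[OF \<rho>]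
          left_mult_one_mat[OF Em_carrier, of d z w] right_mult_one_mat[OF Em_carrier, of d x y]
          left_mult_one_mat[OF one_carrier_mat[of d]]
        by (simp add: ee_def)
    qed
    also have "\<dots> = \<rho> $$ (y,x) * (\<Prod>t\<in>{..<n} - {i}. if t = j then \<rho> $$ (w,z) else 1)"
      using i by (simp add: prod.delta_remove)
    also have "(\<Prod>t\<in>{..<n} - {i}. if t = j then \<rho> $$ (w,z) else 1) = \<rho> $$ (w,z)"
      using j False by simp
    finally show ?thesis using False by simp
  qed
  finally show ?thesis by simp
qed

end

lemma adj_smult: "mat_adjoint (k \<cdot>\<^sub>m A) = cnj k \<cdot>\<^sub>m mat_adjoint A"
  by (rule eq_matI) auto

lemma adj_one: "mat_adjoint (1\<^sub>m d) = (1\<^sub>m d :: complex mat)"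
  by (rule eq_matI) auto

lemma adj_ee: "mat_adjoint (ee d i x y t) = ee d i y x t"
  by (simp add: ee_def Em_adj adj_one)

lemma adj_KK: "mat_adjoint (KK d n i x y) = KK d n i y x"
  by (simp add: KK_def kron_adj kchain_adj adj_ee Em_adj)

lemma Fcar: "(case s of (i,x,y) \<Rightarrow> (1 / of_nat n) \<cdot>\<^sub>m KK d n i x y) \<in> carrier_mat (d^n*d) (d^n*d)"
  by (auto split: prod.splits)

lemma sum3: "(\<Sum>s\<in>{..<n} \<times> {..<d} \<times> {..<d}. f s) = (\<Sum>i<n. \<Sum>x<d. \<Sum>y<d. f (i,x,y))"
  by (simp add: sum.cartesian_product')

lemma Obs_herm: "mat_adjoint (Obs d n) = Obs d n"
proof -
  let ?F = "\<lambda>s. case s of (i,x,y) \<Rightarrow> (1 / of_nat n) \<cdot>\<^sub>m KK d n i x y"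
  let ?N = "d^n*d"
  let ?S = "{..<n} \<times> {..<d} \<times> {..<d}"
  have "mat_adjoint (Obs d n) = msum ?N (\<lambda>s. mat_adjoint (?F s)) ?S"
    unfolding Obs_def by (rule msum_adj) (rule Fcar)
  also have "\<dots> = msum ?N ?F ?S"
  proof (rule eq_matI)
    fix a b assume "a < dim_row (msum ?N ?F ?S)" "b < dim_col (msum ?N ?F ?S)"
    hence a: "a < ?N" and b: "b < ?N" by auto
    have "msum ?N (\<lambda>s. mat_adjoint (?F s)) ?S $$ (a,b) = (\<Sum>s\<in>?S. mat_adjoint (?F s) $$ (a,b))"
      using a b by (simp add: msum_def)
    also have "\<dots> = (\<Sum>i<n. \<Sum>x<d. \<Sum>y<d. mat_adjoint (?F (i,x,y)) $$ (a,b))" by (rule sum3)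
    also have "\<dots> = (\<Sum>i<n. \<Sum>x<d. \<Sum>y<d. ?F (i,y,x) $$ (a,b))"
      by (simp add: adj_smult adj_KK)
    also have "\<dots> = (\<Sum>i<n. \<Sum>x<d. \<Sum>y<d. ?F (i,x,y) $$ (a,b))"
      by (rule sum.cong[OF refl], rule sum.swap)
    also have "\<dots> = (\<Sum>s\<in>?S. ?F s $$ (a,b))" by (rule sum3[symmetric])
    also have "\<dots> = msum ?N ?F ?S $$ (a,b)" using a b by (simp add: msum_def)
    finally show "msum ?N (\<lambda>s. mat_adjoint (?F s)) ?S $$ (a,b) = msum ?N ?F ?S $$ (a,b)" .
  qed auto
  finally show ?thesis unfolding Obs_def .
qed

lemma sum2_lin: "(\<Sum>x<d. \<Sum>y<d. c * (A x y + k * (l * B x y))) =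
   c * ((\<Sum>x<d. \<Sum>y<d. A x y) + k * (l * (\<Sum>x<d. \<Sum>y<d. B x y)))" for c k l :: complex
  by (simp add: sum.distrib sum_distrib_left algebra_simps)

context
  fixes d n :: nat and \<rho> :: "complex mat" and \<psi> :: "complex vec" and lam :: complex
  assumes \<rho>: "\<rho> \<in> carrier_mat d d" and \<psi>: "\<psi> \<in> carrier_vec d"
    and tr\<rho>: "mtrace \<rho> = 1" and eig: "\<rho> *\<^sub>v \<psi> = lam \<cdot>\<^sub>v \<psi>"
    and nrm: "(\<Sum>a<d. \<psi> $ a * cnj (\<psi> $ a)) = 1"
    and n: "0 < n"
begin

lemma X: "Xm d n \<rho> \<psi> \<in> carrier_mat (d^n*d) (d^n*d)" using Xm_carrier[OF \<rho> \<psi>] .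

lemma dbl1: "(\<Sum>x<d. \<Sum>y<d. \<rho> $$ (y,x) * (\<psi> $ x * cnj (\<psi> $ y))) = lam"
proof -
  have "(\<Sum>x<d. \<Sum>y<d. \<rho> $$ (y,x) * (\<psi> $ x * cnj (\<psi> $ y))) = (\<Sum>y<d. \<Sum>x<d. \<rho> $$ (y,x) * (\<psi> $ x * cnj (\<psi> $ y)))"
    by (rule sum.swap)
  also have "\<dots> = (\<Sum>y<d. cnj (\<psi> $ y) * (\<Sum>x<d. \<rho> $$ (y,x) * \<psi> $ x))"
    by (intro sum.cong refl) (simp add: sum_distrib_left ac_simps)
  also have "\<dots> = (\<Sum>y<d. lam * (\<psi> $ y * cnj (\<psi> $ y)))"
    by (intro sum.cong refl) (simp add: rho_psi[OF \<rho> \<psi> tr\<rho> eig nrm])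
  also have "\<dots> = lam" using nrm by (simp flip: sum_distrib_left)
  finally show ?thesis .
qed

lemma T1: "mtrace (Obs d n * Xm d n \<rho> \<psi>) = lam"
proof -
  let ?F = "\<lambda>s. case s of (i,x,y) \<Rightarrow> (1 / of_nat n) \<cdot>\<^sub>m KK d n i x y"
  let ?N = "d^n*d"
  let ?S = "{..<n} \<times> {..<d} \<times> {..<d}"
  let ?X = "Xm d n \<rho> \<psi>"
  have "mtrace (Obs d n * ?X) = mtrace (msum ?N (\<lambda>s. ?F s * ?X) ?S)"
    unfolding Obs_def by (subst msum_mult_right[OF X]) (rule Fcar, rule refl)
  also have "\<dots> = (\<Sum>s\<in>?S. mtrace (?F s * ?X))"
    by (rule msum_trace) (rule mult_carrier_mat[OF Fcar X])
  also have "\<dots> = (\<Sum>i<n. \<Sum>x<d. \<Sum>y<d. mtrace (?F (i,x,y) * ?X))" by (rule sum3)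
  also have "\<dots> = (\<Sum>i<n. \<Sum>x<d. \<Sum>y<d. (1 / of_nat n) * (\<rho> $$ (y,x) * (\<psi> $ x * cnj (\<psi> $ y))))"
  proof (intro sum.cong refl)
    fix i x y assume i: "i \<in> {..<n}" and x: "x \<in> {..<d}" and y: "y \<in> {..<d}"
    have "?F (i,x,y) * ?X = (1 / of_nat n) \<cdot>\<^sub>m (KK d n i x y * ?X)"
      using mult_smult_assoc_mat[OF KK_carrier X] by simp
    hence "mtrace (?F (i,x,y) * ?X) = (1 / of_nat n) * mtrace (KK d n i x y * ?X)"
      using trace_smult[OF mult_carrier_mat[OF KK_carrier X]] by simp
    thus "mtrace (?F (i,x,y) * ?X) = (1 / of_nat n) * (\<rho> $$ (y,x) * (\<psi> $ x * cnj (\<psi> $ y)))"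
      using trK[OF \<rho> \<psi> tr\<rho> eig nrm] i x y by simp
  qed
  also have "\<dots> = (\<Sum>i<n. (1 / of_nat n) * lam)"
    by (rule sum.cong[OF refl]) (simp only: sum_distrib_left[symmetric] dbl1)
  also have "\<dots> = lam" using n by simp
  finally show ?thesis .
qed

lemma inner_sum:
  assumes i: "i < n" and x: "x < d" and y: "y < d"
  shows "(\<Sum>j<n. \<Sum>z<d. \<Sum>w<d. mtrace (KK d n i x y * KK d n j z w * Xm d n \<rho> \<psi>))
     = \<rho> $$ (x,x) * (\<psi> $ y * cnj (\<psi> $ y)) + (of_nat n - 1) * (lam * (\<rho> $$ (y,x) * (\<psi> $ x * cnj (\<psi> $ y))))"
proof -
  have "(\<Sum>j<n. \<Sum>z<d. \<Sum>w<d. mtrace (KK d n i x y * KK d n j z w * Xm d n \<rho> \<psi>))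
     = (\<Sum>j<n. if j = i then \<rho> $$ (x,x) * (\<psi> $ y * cnj (\<psi> $ y)) else lam * (\<rho> $$ (y,x) * (\<psi> $ x * cnj (\<psi> $ y))))"
  proof (intro sum.cong refl)
    fix j assume j: "j \<in> {..<n}"
    have "(\<Sum>z<d. \<Sum>w<d. mtrace (KK d n i x y * KK d n j z w * Xm d n \<rho> \<psi>))
      = (\<Sum>z<d. (if i = j then (if y = z then \<rho> $$ (x,x) else 0) else \<rho> $$ (y,x) * \<rho> $$ (x,z)) * (\<psi> $ z * cnj (\<psi> $ y)))"
    proof (intro sum.cong refl)
      fix z assume z: "z \<in> {..<d}"
      have "(\<Sum>w<d. mtrace (KK d n i x y * KK d n j z w * Xm d n \<rho> \<psi>))
         = (\<Sum>w<d. if x = w then (if i = j then (if y = z then \<rho> $$ (x,x) else 0) else \<rho> $$ (y,x) * \<rho> $$ (x,z)) * (\<psi> $ z * cnj (\<psi> $ y)) else 0)"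
        using trKK[OF \<rho> \<psi> tr\<rho> eig nrm] i j x y z by (intro sum.cong refl) auto
      also have "\<dots> = (if i = j then (if y = z then \<rho> $$ (x,x) else 0) else \<rho> $$ (y,x) * \<rho> $$ (x,z)) * (\<psi> $ z * cnj (\<psi> $ y))"
        using x by simp
      finally show "(\<Sum>w<d. mtrace (KK d n i x y * KK d n j z w * Xm d n \<rho> \<psi>))
         = (if i = j then (if y = z then \<rho> $$ (x,x) else 0) else \<rho> $$ (y,x) * \<rho> $$ (x,z)) * (\<psi> $ z * cnj (\<psi> $ y))" .
    qed
    also have "\<dots> = (if j = i then \<rho> $$ (x,x) * (\<psi> $ y * cnj (\<psi> $ y)) else lam * (\<rho> $$ (y,x) * (\<psi> $ x * cnj (\<psi> $ y))))"
    proof (cases "j = i")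
      case True
      have "(\<Sum>z<d. (if i = j then (if y = z then \<rho> $$ (x,x) else 0) else \<rho> $$ (y,x) * \<rho> $$ (x,z)) * (\<psi> $ z * cnj (\<psi> $ y)))
          = (\<Sum>z<d. if y = z then \<rho> $$ (x,x) * (\<psi> $ z * cnj (\<psi> $ y)) else 0)"
        using True by (intro sum.cong refl) auto
      also have "\<dots> = \<rho> $$ (x,x) * (\<psi> $ y * cnj (\<psi> $ y))" using y by simp
      finally show ?thesis using True by simp
    next
      case False
      have "(\<Sum>z<d. (if i = j then (if y = z then \<rho> $$ (x,x) else 0) else \<rho> $$ (y,x) * \<rho> $$ (x,z)) * (\<psi> $ z * cnj (\<psi> $ y)))
          = (\<rho> $$ (y,x) * cnj (\<psi> $ y)) * (\<Sum>z<d. \<rho> $$ (x,z) * \<psi> $ z)"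
        using False by (simp add: sum_distrib_left ac_simps)
      also have "\<dots> = lam * (\<rho> $$ (y,x) * (\<psi> $ x * cnj (\<psi> $ y)))"
        using rho_psi[OF \<rho> \<psi> tr\<rho> eig nrm x] by (simp add: ac_simps)
      finally show ?thesis using False by simp
    qed
    finally show "(\<Sum>z<d. \<Sum>w<d. mtrace (KK d n i x y * KK d n j z w * Xm d n \<rho> \<psi>))
       = (if j = i then \<rho> $$ (x,x) * (\<psi> $ y * cnj (\<psi> $ y)) else lam * (\<rho> $$ (y,x) * (\<psi> $ x * cnj (\<psi> $ y))))" .
  qed
  also have "\<dots> = \<rho> $$ (x,x) * (\<psi> $ y * cnj (\<psi> $ y)) + (of_nat n - 1) * (lam * (\<rho> $$ (y,x) * (\<psi> $ x * cnj (\<psi> $ y))))"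
    by (rule sum_if_eq[OF i])
  finally show ?thesis .
qed

lemma T2: "mtrace (Obs d n * Obs d n * Xm d n \<rho> \<psi>) = (1 + (of_nat n - 1) * lam^2) / of_nat n"
proof -
  let ?F = "\<lambda>s. case s of (i,x,y) \<Rightarrow> (1 / of_nat n) \<cdot>\<^sub>m KK d n i x y"
  let ?N = "d^n*d"
  let ?S = "{..<n} \<times> {..<d} \<times> {..<d}"
  let ?X = "Xm d n \<rho> \<psi>"
  let ?c = "1 / (of_nat n :: complex)"
  have G: "?F t * ?X \<in> carrier_mat ?N ?N" for t by (rule mult_carrier_mat[OF Fcar X])
  have OX: "Obs d n * ?X = msum ?N (\<lambda>t. ?F t * ?X) ?S"
    unfolding Obs_def by (subst msum_mult_right[OF X]) (rule Fcar, rule refl)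
  have "Obs d n * Obs d n * ?X = Obs d n * (Obs d n * ?X)"
    by (rule assoc_mult_mat[OF Obs_carrier Obs_carrier X])
  also have "\<dots> = msum ?N (\<lambda>s. ?F s * msum ?N (\<lambda>t. ?F t * ?X) ?S) ?S"
    unfolding OX unfolding Obs_def by (subst msum_mult_right[OF msum_carrier]) (rule Fcar, rule refl)
  also have "\<dots> = msum ?N (\<lambda>s. msum ?N (\<lambda>t. ?F s * (?F t * ?X)) ?S) ?S"
    by (subst msum_mult_left[OF Fcar G]) (rule refl)
  finally have e1: "mtrace (Obs d n * Obs d n * ?X) = (\<Sum>s\<in>?S. \<Sum>t\<in>?S. mtrace (?F s * (?F t * ?X)))"
    by (simp add: msum_trace mult_carrier_mat[OF Fcar G])
  have e2: "mtrace (?F (i,x,y) * (?F (j,z,w) * ?X)) = ?c * ?c * mtrace (KK d n i x y * KK d n j z w * ?X)"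
    for i x y j z w
  proof -
    have K1: "KK d n j z w * ?X \<in> carrier_mat ?N ?N" by (rule mult_carrier_mat[OF KK_carrier X])
    have "?F (i,x,y) * (?F (j,z,w) * ?X) = ?F (i,x,y) * (?c \<cdot>\<^sub>m (KK d n j z w * ?X))"
      using mult_smult_assoc_mat[OF KK_carrier X] by simp
    also have "\<dots> = ?c \<cdot>\<^sub>m (KK d n i x y * (?c \<cdot>\<^sub>m (KK d n j z w * ?X)))"
      using mult_smult_assoc_mat[OF KK_carrier smult_carrier_mat[OF K1]] by simp
    also have "KK d n i x y * (?c \<cdot>\<^sub>m (KK d n j z w * ?X)) = ?c \<cdot>\<^sub>m (KK d n i x y * (KK d n j z w * ?X))"
      by (rule mult_smult_distrib[OF KK_carrier K1])
    also have "KK d n i x y * (KK d n j z w * ?X) = KK d n i x y * KK d n j z w * ?X"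
      by (rule assoc_mult_mat[OF KK_carrier KK_carrier X, symmetric])
    finally show ?thesis
      using trace_smult[OF smult_carrier_mat[OF mult_carrier_mat[OF mult_carrier_mat[OF KK_carrier KK_carrier] X]]]
        trace_smult[OF mult_carrier_mat[OF mult_carrier_mat[OF KK_carrier KK_carrier] X]]
      by simp
  qed
  have "(\<Sum>s\<in>?S. \<Sum>t\<in>?S. mtrace (?F s * (?F t * ?X)))
     = (\<Sum>i<n. \<Sum>x<d. \<Sum>y<d. \<Sum>j<n. \<Sum>z<d. \<Sum>w<d. mtrace (?F (i,x,y) * (?F (j,z,w) * ?X)))"
    by (simp add: sum3)
  also have "\<dots> = (\<Sum>i<n. \<Sum>x<d. \<Sum>y<d. ?c * ?c * (\<Sum>j<n. \<Sum>z<d. \<Sum>w<d. mtrace (KK d n i x y * KK d n j z w * ?X)))"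
    by (simp only: e2 sum_distrib_left)
  also have "\<dots> = (\<Sum>i<n. \<Sum>x<d. \<Sum>y<d. ?c * ?c * (\<rho> $$ (x,x) * (\<psi> $ y * cnj (\<psi> $ y)) + (of_nat n - 1) * (lam * (\<rho> $$ (y,x) * (\<psi> $ x * cnj (\<psi> $ y))))))"
    by (intro sum.cong refl) (simp add: inner_sum)
  also have "\<dots> = (\<Sum>i<n. ?c * ?c * ((\<Sum>x<d. \<Sum>y<d. \<rho> $$ (x,x) * (\<psi> $ y * cnj (\<psi> $ y))) + (of_nat n - 1) * (lam * (\<Sum>x<d. \<Sum>y<d. \<rho> $$ (y,x) * (\<psi> $ x * cnj (\<psi> $ y))))))"
    by (rule sum.cong[OF refl]) (rule sum2_lin)
  also have "(\<Sum>x<d. \<Sum>y<d. \<rho> $$ (x,x) * (\<psi> $ y * cnj (\<psi> $ y))) = 1"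
    using tr\<rho> nrm \<rho> by (simp add: mtrace_def flip: sum_distrib_left sum_distrib_right)
  also have "(\<Sum>x<d. \<Sum>y<d. \<rho> $$ (y,x) * (\<psi> $ x * cnj (\<psi> $ y))) = lam" by (rule dbl1)
  also have "(\<Sum>i<n. ?c * ?c * (1 + (of_nat n - 1) * (lam * lam))) = (1 + (of_nat n - 1) * lam^2) / of_nat n"
    using n by (simp add: power2_eq_square field_simps)
  finally show ?thesis using e1 by simp
qed

end

lemma dg_mult: "dg n f * dg n g = dg n (\<lambda>k. f k * g k)"
proof (rule eq_matI)
  fix i j assume "i < dim_row (dg n (\<lambda>k. f k * g k))" "j < dim_col (dg n (\<lambda>k. f k * g k))"
  hence i: "i < n" and j: "j < n" by (auto simp: dg_def)
  have "(dg n f * dg n g) $$ (i,j) = (\<Sum>l<n. dg n f $$ (i,l) * dg n g $$ (l,j))"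
    using i j by (intro mult_entry[OF dg_carrier dg_carrier])
  also have "\<dots> = (\<Sum>l<n. if l = i then (if i = j then f i * g i else 0) else 0)"
    using i j by (intro sum.cong refl) (auto simp: dg_def)
  also have "\<dots> = dg n (\<lambda>k. f k * g k) $$ (i,j)" using i j by (simp add: dg_def)
  finally show "(dg n f * dg n g) $$ (i,j) = dg n (\<lambda>k. f k * g k) $$ (i,j)" .
qed (auto simp: dg_def)

lemma udu_carrier: "U \<in> carrier_mat n n \<Longrightarrow> U * dg n f * mat_adjoint U \<in> carrier_mat n n"
  by (metis adj_carrier dg_carrier mult_carrier_mat)

lemma dg_one: "dg n (\<lambda>_. 1) = 1\<^sub>m n"
  by (rule eq_matI) (auto simp: dg_def)

lemma udu_mult:
  assumes U: "U \<in> carrier_mat n n" and UU: "mat_adjoint U * U = 1\<^sub>m n"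
  shows "U * dg n f * mat_adjoint U * (U * dg n g * mat_adjoint U) = U * dg n (\<lambda>k. f k * g k) * mat_adjoint U"
proof -
  define A where "A = mat_adjoint U"
  have A: "A \<in> carrier_mat n n" unfolding A_def using U by simp
  have F: "dg n f \<in> carrier_mat n n" and G: "dg n g \<in> carrier_mat n n" by auto
  have UF: "U * dg n f \<in> carrier_mat n n" using U by (metis dg_carrier mult_carrier_mat)
  have UG: "U * dg n g \<in> carrier_mat n n" using U by (metis dg_carrier mult_carrier_mat)
  define X where "X = U * dg n f * A"
  have X: "X \<in> carrier_mat n n" unfolding X_def using UF A by (metis mult_carrier_mat)
  have XU: "X * U = U * dg n f"
  proof -
    have "X * U = U * dg n f * (A * U)" unfolding X_def by (rule assoc3[OF UF A U])
    thus ?thesis using UU right_mult_one_mat[OF UF] unfolding A_def by simp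
  qed
  have "X * (U * dg n g * A) = X * (U * dg n g) * A" by (rule assoc3[OF X UG A, symmetric])
  also have "X * (U * dg n g) = X * U * dg n g" by (rule assoc3[OF X U G, symmetric])
  also have "\<dots> = U * (dg n f * dg n g)" unfolding XU by (rule assoc3[OF U F G])
  finally show ?thesis unfolding X_def A_def dg_mult .
qed

lemma pow_udu:
  assumes U: "U \<in> carrier_mat n n" and UU: "mat_adjoint U * U = 1\<^sub>m n" and UU2: "U * mat_adjoint U = 1\<^sub>m n"
  shows "(U * dg n f * mat_adjoint U) ^\<^sub>m p = U * dg n (\<lambda>k. f k ^ p) * mat_adjoint U"
proof (induction p)
  case 0
  have "U * dg n (\<lambda>k. f k ^ 0) * mat_adjoint U = 1\<^sub>m n"
    using U UU2 right_mult_one_mat[OF U] by (simp add: dg_one)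
  moreover have "U * dg n f * mat_adjoint U \<in> carrier_mat n n" using U by (rule udu_carrier)
  ultimately show ?case using U by simp
next
  case (Suc p)
  have "(U * dg n f * mat_adjoint U) ^\<^sub>m Suc p = U * dg n (\<lambda>k. f k ^ p) * mat_adjoint U * (U * dg n f * mat_adjoint U)"
    using Suc by simp
  also have "\<dots> = U * dg n (\<lambda>k. f k ^ p * f k) * mat_adjoint U" by (rule udu_mult[OF U UU])
  finally show ?case by (simp add: mult.commute)
qed

lemma udu_smult:
  assumes U: "U \<in> carrier_mat n n"
  shows "c \<cdot>\<^sub>m (U * dg n f * mat_adjoint U) = U * dg n (\<lambda>k. c * f k) * mat_adjoint U"
proof (rule eq_matI)
  fix i j assume "i < dim_row (U * dg n (\<lambda>k. c * f k) * mat_adjoint U)" "j < dim_col (U * dg n (\<lambda>k. c * f k) * mat_adjoint U)"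
  hence i: "i < n" and j: "j < n" using U by auto
  show "(c \<cdot>\<^sub>m (U * dg n f * mat_adjoint U)) $$ (i,j) = (U * dg n (\<lambda>k. c * f k) * mat_adjoint U) $$ (i,j)"
  proof -
    have "(c \<cdot>\<^sub>m (U * dg n f * mat_adjoint U)) $$ (i,j) = c * (U * dg n f * mat_adjoint U) $$ (i,j)"
      by (rule index_smult_mat) (use i j U in auto)
    also have "(U * dg n f * mat_adjoint U) $$ (i,j) = (\<Sum>k<n. U $$ (i,k) * f k * cnj (U $$ (j,k)))"
      by (rule udu_entry[OF U i j])
    also have "c * \<dots> = (\<Sum>k<n. U $$ (i,k) * (c * f k) * cnj (U $$ (j,k)))"
      by (simp add: sum_distrib_left ac_simps)
    also have "\<dots> = (U * dg n (\<lambda>k. c * f k) * mat_adjoint U) $$ (i,j)"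
      by (rule udu_entry[symmetric, OF U i j])
    finally show ?thesis .
  qed
qed (use U in auto)

lemma exp_sums: "(\<lambda>p. z ^ p / of_nat (fact p)) sums exp (z::complex)"
proof -
  have "(\<lambda>p. z ^ p /\<^sub>R fact p) = (\<lambda>p. z ^ p / of_nat (fact p))"
    by (rule ext) (simp add: scaleR_conv_of_real divide_inverse mult.commute)
  thus ?thesis using exp_converges[of z] by simp
qed

lemma mat_exp_udu:
  assumes U: "U \<in> carrier_mat n n" and UU: "mat_adjoint U * U = 1\<^sub>m n" and UU2: "U * mat_adjoint U = 1\<^sub>m n"
  shows "mat_exp (U * dg n f * mat_adjoint U) = U * dg n (\<lambda>k. exp (f k)) * mat_adjoint U"
proof (rule eq_matI)
  fix a b assume "a < dim_row (U * dg n (\<lambda>k. exp (f k)) * mat_adjoint U)" "b < dim_col (U * dg n (\<lambda>k. exp (f k)) * mat_adjoint U)"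
  hence a: "a < n" and b: "b < n" using U by auto
  have car: "U * dg n f * mat_adjoint U \<in> carrier_mat n n" using U by (rule udu_carrier)
  have "mat_exp (U * dg n f * mat_adjoint U) $$ (a,b) = (\<Sum>p. ((U * dg n f * mat_adjoint U) ^\<^sub>m p) $$ (a,b) / of_nat (fact p))"
    using a b car U by (simp add: mat_exp_def)
  also have "\<dots> = (\<Sum>p. \<Sum>k<n. U $$ (a,k) * cnj (U $$ (b,k)) * (f k ^ p / of_nat (fact p)))"
    by (rule arg_cong[where f=suminf], rule ext)
       (simp add: pow_udu[OF U UU UU2] udu_entry[OF U a b] sum_divide_distrib ac_simps)
  also have "\<dots> = (\<Sum>k<n. \<Sum>p. U $$ (a,k) * cnj (U $$ (b,k)) * (f k ^ p / of_nat (fact p)))"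
    by (rule suminf_sum) (intro summable_mult sums_summable[OF exp_sums])
  also have "\<dots> = (\<Sum>k<n. U $$ (a,k) * cnj (U $$ (b,k)) * exp (f k))"
    by (intro sum.cong refl sums_unique[symmetric] sums_mult exp_sums)
  also have "\<dots> = (U * dg n (\<lambda>k. exp (f k)) * mat_adjoint U) $$ (a,b)"
    by (simp add: udu_entry[OF U a b] ac_simps)
  finally show "mat_exp (U * dg n f * mat_adjoint U) $$ (a,b) = (U * dg n (\<lambda>k. exp (f k)) * mat_adjoint U) $$ (a,b)" .
qed (use U in \<open>auto simp: mat_exp_def\<close>)

lemma cis_eq_int: "cis x = cis y \<Longrightarrow> \<exists>K::int. x - y = 2 * pi * of_int K"
proof -
  assume h: "cis x = cis y"
  have "cis (x - y) = 1" using cis_divide[of x y] h by simp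
  hence "cos (x - y) = 1" by (metis cis.sel(1) one_complex.sel(1))
  then obtain K :: int where "x - y = of_int K * 2 * pi" using cos_one_2pi_int by blast
  thus ?thesis by (intro exI[of _ K]) simp
qed

lemma cis_eq_small:
  assumes "cis x = cis y" "\<bar>x - y\<bar> < 2 * pi" shows "x = y"
proof -
  obtain K :: int where K: "x - y = 2 * pi * of_int K" using cis_eq_int[OF assms(1)] by blast
  have "\<bar>of_int K\<bar> < (1::real)" using assms(2) K pi_gt_zero by (simp add: abs_mult)
  hence "K = 0" by linarith
  thus ?thesis using K by simp
qed

lemma adj_dg: "mat_adjoint (dg n f) = dg n (\<lambda>k. cnj (f k))"
  by (rule eq_matI) (auto simp: dg_def)

lemma mult_vec_entry:
  assumes "A \<in> carrier_mat n n" "v \<in> carrier_vec n" "a < n"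
  shows "(A *\<^sub>v v) $ a = (\<Sum>b<n. A $$ (a,b) * v $ b)"
  using assms by (simp add: scalar_prod_def lessThan_atLeast0)

context
  fixes U :: "complex mat" and d :: nat
  assumes U: "U \<in> carrier_mat d d" and UU: "mat_adjoint U * U = 1\<^sub>m d" and UU2: "U * mat_adjoint U = 1\<^sub>m d"
begin

lemma orth: "k < d \<Longrightarrow> l < d \<Longrightarrow> (\<Sum>a<d. cnj (U $$ (a,k)) * U $$ (a,l)) = (if k = l then 1 else 0)"
proof -
  assume k: "k < d" and l: "l < d"
  have "(mat_adjoint U * U) $$ (k,l) = (\<Sum>a<d. mat_adjoint U $$ (k,a) * U $$ (a,l))"
    by (rule mult_entry[OF adj_carrier[OF U] U k l])
  also have "\<dots> = (\<Sum>a<d. cnj (U $$ (a,k)) * U $$ (a,l))"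
    using U k by (intro sum.cong refl) auto
  finally show ?thesis using UU k l by simp
qed

lemma compl: "a < d \<Longrightarrow> b < d \<Longrightarrow> (\<Sum>k<d. U $$ (a,k) * cnj (U $$ (b,k))) = (if a = b then 1 else 0)"
proof -
  assume a: "a < d" and b: "b < d"
  have "(U * mat_adjoint U) $$ (a,b) = (\<Sum>k<d. U $$ (a,k) * mat_adjoint U $$ (k,b))"
    by (rule mult_entry[OF U adj_carrier[OF U] a b])
  also have "\<dots> = (\<Sum>k<d. U $$ (a,k) * cnj (U $$ (b,k)))"
    using U b by (intro sum.cong refl) auto
  finally show ?thesis using UU2 a b by simp
qed

lemma gen_apply:
  assumes a: "a < d"
  shows "(\<Sum>b<d. (\<Sum>k<d. U $$ (a,k) * g k * cnj (U $$ (b,k))) * v b)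
       = (\<Sum>k<d. U $$ (a,k) * g k * (\<Sum>b<d. cnj (U $$ (b,k)) * v b))"
proof -
  have "(\<Sum>b<d. (\<Sum>k<d. U $$ (a,k) * g k * cnj (U $$ (b,k))) * v b)
      = (\<Sum>b<d. \<Sum>k<d. U $$ (a,k) * g k * (cnj (U $$ (b,k)) * v b))"
    by (intro sum.cong refl) (simp add: sum_distrib_right mult.assoc)
  also have "\<dots> = (\<Sum>k<d. \<Sum>b<d. U $$ (a,k) * g k * (cnj (U $$ (b,k)) * v b))" by (rule sum.swap)
  also have "\<dots> = (\<Sum>k<d. U $$ (a,k) * g k * (\<Sum>b<d. cnj (U $$ (b,k)) * v b))"
    by (simp add: sum_distrib_left)
  finally show ?thesis .
qed

lemma proj_back:
  assumes l: "l < d"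
  shows "(\<Sum>a<d. cnj (U $$ (a,l)) * (\<Sum>k<d. U $$ (a,k) * g k)) = g l"
proof -
  have "(\<Sum>a<d. cnj (U $$ (a,l)) * (\<Sum>k<d. U $$ (a,k) * g k)) = (\<Sum>a<d. \<Sum>k<d. (cnj (U $$ (a,l)) * U $$ (a,k)) * g k)"
    by (simp add: sum_distrib_left ac_simps)
  also have "\<dots> = (\<Sum>k<d. \<Sum>a<d. (cnj (U $$ (a,l)) * U $$ (a,k)) * g k)" by (rule sum.swap)
  also have "\<dots> = (\<Sum>k<d. (\<Sum>a<d. cnj (U $$ (a,l)) * U $$ (a,k)) * g k)"
    by (simp add: sum_distrib_right)
  also have "\<dots> = (\<Sum>k<d. if l = k then g k else 0)"
    using l by (intro sum.cong refl) (simp add: orth)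
  also have "\<dots> = g l" using l by simp
  finally show ?thesis .
qed

lemma expand:
  assumes a: "a < d"
  shows "(\<Sum>k<d. U $$ (a,k) * (\<Sum>b<d. cnj (U $$ (b,k)) * v b)) = v a"
proof -
  have "(\<Sum>k<d. U $$ (a,k) * (\<Sum>b<d. cnj (U $$ (b,k)) * v b)) = (\<Sum>k<d. \<Sum>b<d. (U $$ (a,k) * cnj (U $$ (b,k))) * v b)"
    by (simp add: sum_distrib_left ac_simps)
  also have "\<dots> = (\<Sum>b<d. \<Sum>k<d. (U $$ (a,k) * cnj (U $$ (b,k))) * v b)" by (rule sum.swap)
  also have "\<dots> = (\<Sum>b<d. (\<Sum>k<d. U $$ (a,k) * cnj (U $$ (b,k))) * v b)"
    by (simp add: sum_distrib_right)
  also have "\<dots> = (\<Sum>b<d. if a = b then v b else 0)"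
    using a by (intro sum.cong refl) (simp add: compl)
  also have "\<dots> = v a" using a by simp
  finally show ?thesis .
qed

end

lemma rho_analysis:
  assumes dm: "density_matrix d \<rho>" and us: "unit_state d \<psi>"
    and ev: "mat_exp (- \<i> \<cdot>\<^sub>m \<rho>) *\<^sub>v \<psi> = exp (\<i> * complex_of_real \<theta>) \<cdot>\<^sub>v \<psi>"
  shows "\<exists>lam::real. \<rho> *\<^sub>v \<psi> = complex_of_real lam \<cdot>\<^sub>v \<psi> \<and> (\<exists>K::int. \<theta> = - lam + 2 * pi * of_int K)
     \<and> (\<exists>B. B \<in> carrier_mat d d \<and> \<rho> = B * mat_adjoint B)"
proof -
  have \<rho>: "\<rho> \<in> carrier_mat d d" and herm: "mat_adjoint \<rho> = \<rho>"
    and quad: "\<And>v. v \<in> carrier_vec d \<Longrightarrow> 0 \<le> Re (\<Sum>i<d. cnj (v $ i) * (\<rho> *\<^sub>v v) $ i)"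
    and tr: "mtrace \<rho> = 1"
    using dm unfolding density_matrix_def psd_def by auto
  have \<psi>: "\<psi> \<in> carrier_vec d" and nrm0: "(\<Sum>i<d. cmod (\<psi> $ i) ^ 2) = 1"
    using us unfolding unit_state_def by auto
  have nrm: "(\<Sum>a<d. \<psi> $ a * cnj (\<psi> $ a)) = 1"
  proof -
    have "(\<Sum>a<d. \<psi> $ a * cnj (\<psi> $ a)) = (\<Sum>a<d. complex_of_real (cmod (\<psi> $ a) ^ 2))"
      by (intro sum.cong refl) (metis complex_norm_square)
    also have "\<dots> = complex_of_real (\<Sum>a<d. cmod (\<psi> $ a) ^ 2)" by simp
    finally show ?thesis using nrm0 by simp
  qed
  obtain U and \<mu> :: "nat \<Rightarrow> real" where U: "U \<in> carrier_mat d d" and UU: "mat_adjoint U * U = 1\<^sub>m d"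
    and UU2: "U * mat_adjoint U = 1\<^sub>m d" and \<rho>eq: "\<rho> = U * dg d (\<lambda>i. complex_of_real (\<mu> i)) * mat_adjoint U"
    using spectral[OF \<rho> herm] by blast
  have \<rho>ent: "\<rho> $$ (a,b) = (\<Sum>k<d. U $$ (a,k) * complex_of_real (\<mu> k) * cnj (U $$ (b,k)))"
    if "a < d" "b < d" for a b
    using udu_entry[OF U that] \<rho>eq by simp
  define c where "c k = (\<Sum>b<d. cnj (U $$ (b,k)) * \<psi> $ b)" for k
  have \<psi>exp: "\<psi> $ a = (\<Sum>k<d. U $$ (a,k) * c k)" if a: "a < d" for a
    unfolding c_def using expand[OF U UU UU2 a, of "\<lambda>b. \<psi> $ b"] by simp
  have \<rho>U: "\<rho> * U = U * dg d (\<lambda>i. complex_of_real (\<mu> i))"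
  proof -
    have UD: "U * dg d (\<lambda>i. complex_of_real (\<mu> i)) \<in> carrier_mat d d" using U by (metis dg_carrier mult_carrier_mat)
    have "\<rho> * U = U * dg d (\<lambda>i. complex_of_real (\<mu> i)) * (mat_adjoint U * U)"
      unfolding \<rho>eq by (rule assoc3[OF UD adj_carrier[OF U] U])
    thus ?thesis using UU right_mult_one_mat[OF UD] by simp
  qed
  have \<mu>nn: "0 \<le> \<mu> l" if l: "l < d" for l
  proof -
    define v where "v = col U l"
    have v: "v \<in> carrier_vec d" unfolding v_def carrier_vec_def using U by simp
    have \<rho>v: "(\<rho> *\<^sub>v v) $ i = U $$ (i,l) * complex_of_real (\<mu> l)" if i: "i < d" for i
    proof -
      have "(\<rho> *\<^sub>v v) $ i = (\<Sum>b<d. \<rho> $$ (i,b) * U $$ (b,l))"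
        using mult_vec_entry[OF \<rho> v i] U l unfolding v_def by simp
      also have "\<dots> = (\<rho> * U) $$ (i,l)" by (rule mult_entry[OF \<rho> U i l, symmetric])
      also have "\<dots> = (\<Sum>k<d. U $$ (i,k) * dg d (\<lambda>i. complex_of_real (\<mu> i)) $$ (k,l))"
        unfolding \<rho>U by (rule mult_entry[OF U dg_carrier i l])
      also have "\<dots> = (\<Sum>k<d. if k = l then U $$ (i,l) * complex_of_real (\<mu> l) else 0)"
        using l by (intro sum.cong refl) (auto simp: dg_def)
      finally show ?thesis using l by simp
    qed
    have "(\<Sum>i<d. cnj (v $ i) * (\<rho> *\<^sub>v v) $ i) = (\<Sum>i<d. complex_of_real (\<mu> l) * (cnj (U $$ (i,l)) * U $$ (i,l)))"
    proof (intro sum.cong refl)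
      fix i assume "i \<in> {..<d}"
      hence i: "i < d" by simp
      have "v $ i = U $$ (i,l)" unfolding v_def using U i l by simp
      thus "cnj (v $ i) * (\<rho> *\<^sub>v v) $ i = complex_of_real (\<mu> l) * (cnj (U $$ (i,l)) * U $$ (i,l))"
        using \<rho>v[OF i] by simp
    qed
    also have "\<dots> = complex_of_real (\<mu> l)" using orth[OF U UU UU2 l l] by (simp flip: sum_distrib_left)
    finally show ?thesis using quad[OF v] by simp
  qed
  have \<mu>sum: "(\<Sum>k<d. \<mu> k) = 1"
  proof -
    have "mtrace \<rho> = (\<Sum>a<d. \<Sum>k<d. U $$ (a,k) * complex_of_real (\<mu> k) * cnj (U $$ (a,k)))"
      using \<rho> by (simp add: mtrace_def \<rho>ent)
    also have "\<dots> = (\<Sum>k<d. \<Sum>a<d. complex_of_real (\<mu> k) * (cnj (U $$ (a,k)) * U $$ (a,k)))"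
      by (subst sum.swap) (simp add: ac_simps)
    also have "\<dots> = (\<Sum>k<d. complex_of_real (\<mu> k))"
      by (intro sum.cong refl) (simp add: orth[OF U UU UU2] flip: sum_distrib_left)
    finally have "complex_of_real (\<Sum>k<d. \<mu> k) = 1" using tr by simp
    thus ?thesis by (metis of_real_eq_1_iff)
  qed
  have \<mu>le: "\<mu> l \<le> 1" if l: "l < d" for l
  proof -
    have "\<mu> l \<le> (\<Sum>k<d. \<mu> k)" using l \<mu>nn by (intro member_le_sum) auto
    thus ?thesis using \<mu>sum by simp
  qed
  define e where "e k = exp (- \<i> * complex_of_real (\<mu> k))" for k
  have Eeq: "mat_exp (- \<i> \<cdot>\<^sub>m \<rho>) = U * dg d e * mat_adjoint U"
    unfolding \<rho>eq udu_smult[OF U] mat_exp_udu[OF U UU UU2] e_def by simp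
  define \<omega> where "\<omega> = exp (\<i> * complex_of_real \<theta>)"
  have el: "e l * c l = \<omega> * c l" if l: "l < d" for l
  proof -
    have row: "(\<Sum>k<d. U $$ (a,k) * (e k * c k)) = \<omega> * \<psi> $ a" if a: "a < d" for a
    proof -
      have "(mat_exp (- \<i> \<cdot>\<^sub>m \<rho>) *\<^sub>v \<psi>) $ a = (\<Sum>b<d. (U * dg d e * mat_adjoint U) $$ (a,b) * \<psi> $ b)"
        unfolding Eeq by (rule mult_vec_entry[OF udu_carrier[OF U] \<psi> a])
      also have "\<dots> = (\<Sum>b<d. (\<Sum>k<d. U $$ (a,k) * e k * cnj (U $$ (b,k))) * \<psi> $ b)"
        using a by (intro sum.cong refl) (simp add: udu_entry[OF U])
      also have "\<dots> = (\<Sum>k<d. U $$ (a,k) * (e k * c k))"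
        unfolding gen_apply[OF U UU UU2 a] c_def by (simp add: ac_simps)
      finally show ?thesis using ev a \<psi> unfolding \<omega>_def by simp
    qed
    have "e l * c l = (\<Sum>a<d. cnj (U $$ (a,l)) * (\<Sum>k<d. U $$ (a,k) * (e k * c k)))"
      by (rule proj_back[OF U UU UU2 l, symmetric])
    also have "\<dots> = (\<Sum>a<d. cnj (U $$ (a,l)) * (\<omega> * \<psi> $ a))" by (intro sum.cong refl) (simp add: row)
    also have "\<dots> = \<omega> * c l" unfolding c_def by (simp add: sum_distrib_left ac_simps)
    finally show ?thesis .
  qed
  have "\<exists>l0<d. c l0 \<noteq> 0"
  proof (rule ccontr)
    assume "\<not> (\<exists>l0<d. c l0 \<noteq> 0)"
    hence "\<And>l. l < d \<Longrightarrow> c l = 0" by auto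
    hence "\<And>a. a < d \<Longrightarrow> \<psi> $ a = 0" using \<psi>exp by simp
    hence "(\<Sum>a<d. \<psi> $ a * cnj (\<psi> $ a)) = 0" by simp
    thus False using nrm by simp
  qed
  then obtain l0 where l0: "l0 < d" and cl0: "c l0 \<noteq> 0" by blast
  define lam where "lam = \<mu> l0"
  have cis_e: "e k = cis (- \<mu> k)" for k unfolding e_def by (simp add: cis_conv_exp)
  have \<omega>cis: "\<omega> = cis \<theta>" unfolding \<omega>_def by (simp add: cis_conv_exp)
  have el0: "e l0 = \<omega>" using el[OF l0] cl0 by simp
  have \<mu>lam: "\<mu> l = lam" if l: "l < d" and cl: "c l \<noteq> 0" for l
  proof -
    have "e l = e l0" using el[OF l] cl el0 by simp
    hence "cis (- \<mu> l) = cis (- \<mu> l0)" by (simp add: cis_e)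
    moreover have "\<bar>- \<mu> l - - \<mu> l0\<bar> < 2 * pi"
      using \<mu>nn[OF l] \<mu>le[OF l] \<mu>nn[OF l0] \<mu>le[OF l0] pi_ge_two by auto
    ultimately have "- \<mu> l = - \<mu> l0" by (rule cis_eq_small)
    thus ?thesis unfolding lam_def by simp
  qed
  have \<theta>eq: "\<exists>K::int. \<theta> = - lam + 2 * pi * of_int K"
  proof -
    have "cis \<theta> = cis (- lam)" using el0 \<omega>cis cis_e unfolding lam_def by simp
    then obtain K :: int where "\<theta> - - lam = 2 * pi * of_int K" using cis_eq_int by blast
    thus ?thesis by (intro exI[of _ K]) simp
  qed
  have \<rho>\<psi>: "\<rho> *\<^sub>v \<psi> = complex_of_real lam \<cdot>\<^sub>v \<psi>"
  proof (rule eq_vecI)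
    fix a assume "a < dim_vec (complex_of_real lam \<cdot>\<^sub>v \<psi>)"
    hence a: "a < d" using \<psi> by simp
    have "(\<rho> *\<^sub>v \<psi>) $ a = (\<Sum>b<d. \<rho> $$ (a,b) * \<psi> $ b)" by (rule mult_vec_entry[OF \<rho> \<psi> a])
    also have "\<dots> = (\<Sum>b<d. (\<Sum>k<d. U $$ (a,k) * complex_of_real (\<mu> k) * cnj (U $$ (b,k))) * \<psi> $ b)"
      using a by (intro sum.cong refl) (simp add: \<rho>ent)
    also have "\<dots> = (\<Sum>k<d. U $$ (a,k) * complex_of_real (\<mu> k) * c k)"
      unfolding gen_apply[OF U UU UU2 a] c_def ..
    also have "\<dots> = (\<Sum>k<d. complex_of_real lam * (U $$ (a,k) * c k))"
    proof (intro sum.cong refl)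
      fix k assume k: "k \<in> {..<d}"
      show "U $$ (a,k) * complex_of_real (\<mu> k) * c k = complex_of_real lam * (U $$ (a,k) * c k)"
        using \<mu>lam[of k] k by (cases "c k = 0") auto
    qed
    also have "\<dots> = complex_of_real lam * \<psi> $ a" using \<psi>exp[OF a] by (simp add: sum_distrib_left)
    finally show "(\<rho> *\<^sub>v \<psi>) $ a = (complex_of_real lam \<cdot>\<^sub>v \<psi>) $ a" using a \<psi> by simp
  qed (use \<rho> \<psi> in auto)
  define s where "s k = complex_of_real (sqrt (\<mu> k))" for k
  define B where "B = U * dg d s"
  have B: "B \<in> carrier_mat d d" unfolding B_def using U by (metis dg_carrier mult_carrier_mat)
  have adjB: "mat_adjoint B = dg d s * mat_adjoint U"
    unfolding B_def adj_mult[OF U dg_carrier] adj_dg s_def by simp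
  have ss: "dg d (\<lambda>k. s k * s k) = dg d (\<lambda>i. complex_of_real (\<mu> i))"
  proof (rule eq_matI)
    fix i j assume "i < dim_row (dg d (\<lambda>i. complex_of_real (\<mu> i)))" "j < dim_col (dg d (\<lambda>i. complex_of_real (\<mu> i)))"
    hence i: "i < d" and j: "j < d" by (auto simp: dg_def)
    have "s i * s i = complex_of_real (\<mu> i)" using \<mu>nn[OF i] unfolding s_def by (simp flip: of_real_mult)
    thus "dg d (\<lambda>k. s k * s k) $$ (i,j) = dg d (\<lambda>i. complex_of_real (\<mu> i)) $$ (i,j)"
      using i j by (cases "i = j") (auto simp: dg_def)
  qed (auto simp: dg_def)
  have "B * mat_adjoint B = U * dg d s * (dg d s * mat_adjoint U)" unfolding adjB unfolding B_def ..
  also have "\<dots> = U * (dg d s * (dg d s * mat_adjoint U))"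
    by (rule assoc3[OF U dg_carrier mult_carrier_mat[OF dg_carrier adj_carrier[OF U]]])
  also have "dg d s * (dg d s * mat_adjoint U) = dg d s * dg d s * mat_adjoint U"
    by (rule assoc3[OF dg_carrier dg_carrier adj_carrier[OF U], symmetric])
  also have "U * (dg d s * dg d s * mat_adjoint U) = U * (dg d s * dg d s) * mat_adjoint U"
    by (rule assoc3[OF U mult_carrier_mat[OF dg_carrier dg_carrier] adj_carrier[OF U], symmetric])
  also have "dg d s * dg d s = dg d (\<lambda>i. complex_of_real (\<mu> i))" unfolding dg_mult ss ..
  finally have "\<rho> = B * mat_adjoint B" using \<rho>eq by simp
  thus ?thesis using \<rho>\<psi> \<theta>eq B by blast
qed

lemma trace_mult_entry:
  assumes A: "A \<in> carrier_mat N N" and Y: "Y \<in> carrier_mat N N"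
  shows "mtrace (A * Y) = (\<Sum>a<N. \<Sum>b<N. A $$ (a,b) * Y $$ (b,a))"
proof -
  have "mtrace (A * Y) = (\<Sum>a<N. (A * Y) $$ (a,a))" using A by (simp add: mtrace_def)
  also have "\<dots> = (\<Sum>a<N. \<Sum>b<N. A $$ (a,b) * Y $$ (b,a))"
  proof (rule sum.cong[OF refl])
    fix a assume "a \<in> {..<N}"
    hence a: "a < N" by simp
    show "(A * Y) $$ (a,a) = (\<Sum>b<N. A $$ (a,b) * Y $$ (b,a))" by (rule mult_entry[OF A Y a a])
  qed
  finally show ?thesis .
qed

lemma proj_trace:
  assumes u: "u \<in> carrier_vec N" and Y: "Y \<in> carrier_mat N N"
  shows "mtrace (proj u * Y) = (\<Sum>a<N. \<Sum>b<N. u $ a * cnj (u $ b) * Y $$ (b,a))"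
proof -
  have P: "proj u \<in> carrier_mat N N" by (rule proj_carrier[OF u])
  show ?thesis unfolding trace_mult_entry[OF P Y] using u
    by (intro sum.cong refl) (simp add: proj_def)
qed

lemma gram_nonneg:
  assumes K: "K \<in> carrier_mat N M" and u: "u \<in> carrier_vec N"
  shows "0 \<le> Re (mtrace (proj u * (K * mat_adjoint K)))"
proof -
  have KK: "K * mat_adjoint K \<in> carrier_mat N N" using K by (metis adj_carrier mult_carrier_mat)
  define w where "w c = (\<Sum>b<N. cnj (u $ b) * K $$ (b,c))" for c
  have "mtrace (proj u * (K * mat_adjoint K)) = (\<Sum>a<N. \<Sum>b<N. u $ a * cnj (u $ b) * (\<Sum>c<M. K $$ (b,c) * cnj (K $$ (a,c))))"
    unfolding proj_trace[OF u KK]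
  proof (intro sum.cong refl)
    fix a b assume a: "a \<in> {..<N}" and b: "b \<in> {..<N}"
    have "(K * mat_adjoint K) $$ (b,a) = (\<Sum>c<M. K $$ (b,c) * mat_adjoint K $$ (c,a))"
      using a b by (intro mult_entry[OF K adj_carrier[OF K]]) auto
    also have "\<dots> = (\<Sum>c<M. K $$ (b,c) * cnj (K $$ (a,c)))" using K a by (intro sum.cong refl) auto
    finally show "u $ a * cnj (u $ b) * (K * mat_adjoint K) $$ (b,a) = u $ a * cnj (u $ b) * (\<Sum>c<M. K $$ (b,c) * cnj (K $$ (a,c)))" by simp
  qed
  also have "\<dots> = (\<Sum>a<N. \<Sum>b<N. \<Sum>c<M. (u $ a * cnj (K $$ (a,c))) * (cnj (u $ b) * K $$ (b,c)))"
    by (simp add: sum_distrib_left ac_simps)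
  also have "\<dots> = (\<Sum>a<N. \<Sum>c<M. \<Sum>b<N. (u $ a * cnj (K $$ (a,c))) * (cnj (u $ b) * K $$ (b,c)))"
    by (rule sum.cong[OF refl], rule sum.swap)
  also have "\<dots> = (\<Sum>c<M. \<Sum>a<N. \<Sum>b<N. (u $ a * cnj (K $$ (a,c))) * (cnj (u $ b) * K $$ (b,c)))"
    by (rule sum.swap)
  also have "\<dots> = (\<Sum>c<M. cnj (w c) * w c)"
  proof (intro sum.cong refl)
    fix c
    have "cnj (w c) = (\<Sum>a<N. u $ a * cnj (K $$ (a,c)))" unfolding w_def by simp
    thus "(\<Sum>a<N. \<Sum>b<N. (u $ a * cnj (K $$ (a,c))) * (cnj (u $ b) * K $$ (b,c))) = cnj (w c) * w c"
      unfolding w_def by (simp add: sum_product)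
  qed
  also have "\<dots> = (\<Sum>c<M. complex_of_real ((cmod (w c))^2))"
    by (rule sum.cong[OF refl]) (metis complex_norm_square mult.commute)
  finally show ?thesis by (simp add: sum_nonneg)
qed

lemma cheb:
  fixes p x :: "nat \<Rightarrow> real"
  assumes p: "\<And>k. k < N \<Longrightarrow> 0 \<le> p k" and Bd: "Bd \<subseteq> {..<N}"
    and bad: "\<And>k. k \<in> Bd \<Longrightarrow> \<epsilon> < \<bar>x k\<bar>" and e: "0 < \<epsilon>"
    and tot: "(\<Sum>k<N. p k * (x k)^2) \<le> T"
  shows "(\<Sum>k\<in>Bd. p k) \<le> T / \<epsilon>^2"
proof -
  have fin: "finite Bd" using Bd finite_subset by blast
  have "(\<Sum>k\<in>Bd. p k) \<le> (\<Sum>k\<in>Bd. p k * (x k)^2 / \<epsilon>^2)"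
  proof (rule sum_mono)
    fix k assume k: "k \<in> Bd"
    have pk: "0 \<le> p k" using p k Bd by auto
    have "\<epsilon>^2 \<le> (x k)^2" using bad[OF k] e by (metis abs_le_square_iff less_imp_le abs_of_pos)
    hence "1 \<le> (x k)^2 / \<epsilon>^2" using e by simp
    hence "p k * 1 \<le> p k * ((x k)^2 / \<epsilon>^2)" using pk by (rule mult_left_mono)
    thus "p k \<le> p k * (x k)^2 / \<epsilon>^2" by simp
  qed
  also have "\<dots> \<le> (\<Sum>k<N. p k * (x k)^2 / \<epsilon>^2)"
    using Bd p by (intro sum_mono2) auto
  also have "\<dots> = (\<Sum>k<N. p k * (x k)^2) / \<epsilon>^2" by (simp add: sum_divide_distrib)
  also have "\<dots> \<le> T / \<epsilon>^2" using tot e by (simp add: divide_right_mono)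
  finally show ?thesis .
qed

lemma proj_psd:
  assumes u: "u \<in> carrier_vec N"
  shows "psd N (proj u)"
proof -
  have P: "proj u \<in> carrier_mat N N" by (rule proj_carrier[OF u])
  have herm: "mat_adjoint (proj u) = proj u"
    by (rule eq_matI) (use u in \<open>auto simp: proj_def\<close>)
  have "0 \<le> Re (\<Sum>i<N. cnj (v $ i) * (proj u *\<^sub>v v) $ i)" if v: "v \<in> carrier_vec N" for v
  proof -
    define w where "w = (\<Sum>j<N. cnj (u $ j) * v $ j)"
    have "(proj u *\<^sub>v v) $ i = u $ i * w" if i: "i < N" for i
      using mult_vec_entry[OF P v i] u i unfolding w_def by (simp add: proj_def sum_distrib_left ac_simps)
    hence "(\<Sum>i<N. cnj (v $ i) * (proj u *\<^sub>v v) $ i) = (\<Sum>i<N. cnj (v $ i) * u $ i) * w"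
      by (simp add: sum_distrib_right mult.assoc)
    also have "(\<Sum>i<N. cnj (v $ i) * u $ i) = cnj w" unfolding w_def by (simp add: mult.commute)
    also have "cnj w * w = complex_of_real ((cmod w)^2)" by (metis complex_norm_square mult.commute)
    finally show ?thesis by simp
  qed
  thus ?thesis unfolding psd_def using P herm by auto
qed

lemma kron_gram:
  assumes B: "B \<in> carrier_mat d d" and \<psi>: "\<psi> \<in> carrier_vec d"
  shows "Xm d n (B * mat_adjoint B) \<psi> = kron (kchain (\<lambda>_. B) n) (mat d 1 (\<lambda>(a,_). \<psi> $ a))
      * mat_adjoint (kron (kchain (\<lambda>_. B) n) (mat d 1 (\<lambda>(a,_). \<psi> $ a)))"
proof -
  define A where "A = kchain (\<lambda>_. B) n"
  define \<Psi> where "\<Psi> = mat d 1 (\<lambda>(a,_). \<psi> $ a)"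
  have A: "A \<in> carrier_mat (d^n) (d^n)" unfolding A_def by (rule kchain_carrier) (use B in auto)
  have \<Psi>: "\<Psi> \<in> carrier_mat d 1" unfolding \<Psi>_def by simp
  have "kchain (\<lambda>_. B * mat_adjoint B) n = kchain (\<lambda>_. B) n * kchain (\<lambda>_. mat_adjoint B) n"
    by (rule kchain_mult[where d=d, symmetric]) (use B in auto)
  also have "kchain (\<lambda>_. mat_adjoint B) n = mat_adjoint A" unfolding A_def kchain_adj ..
  finally have kc: "kchain (\<lambda>_. B * mat_adjoint B) n = A * mat_adjoint A" unfolding A_def .
  have pj: "proj \<psi> = \<Psi> * mat_adjoint \<Psi>"
  proof (rule eq_matI)
    fix i j assume "i < dim_row (\<Psi> * mat_adjoint \<Psi>)" "j < dim_col (\<Psi> * mat_adjoint \<Psi>)"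
    hence i: "i < d" and j: "j < d" using \<Psi> by auto
    have "(\<Psi> * mat_adjoint \<Psi>) $$ (i,j) = (\<Sum>c<1. \<Psi> $$ (i,c) * mat_adjoint \<Psi> $$ (c,j))"
      by (rule mult_entry[OF \<Psi> adj_carrier[OF \<Psi>] i j])
    thus "proj \<psi> $$ (i,j) = (\<Psi> * mat_adjoint \<Psi>) $$ (i,j)"
      using i j \<psi> by (simp add: proj_def \<Psi>_def)
  qed (use \<psi> \<Psi> in \<open>auto simp: proj_def\<close>)
  have "Xm d n (B * mat_adjoint B) \<psi> = kron (A * mat_adjoint A) (\<Psi> * mat_adjoint \<Psi>)"
    unfolding Xm_def kc pj ..
  also have "\<dots> = kron A \<Psi> * kron (mat_adjoint A) (mat_adjoint \<Psi>)"
    by (rule kron_mult[OF A \<Psi> adj_carrier[OF A] adj_carrier[OF \<Psi>], symmetric])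
  also have "kron (mat_adjoint A) (mat_adjoint \<Psi>) = mat_adjoint (kron A \<Psi>)" by (rule kron_adj[symmetric])
  finally show ?thesis unfolding A_def \<Psi>_def .
qed

lemma povm_identity:
  assumes V: "V \<in> carrier_mat N N" and X: "X \<in> carrier_mat N N"
  shows "mtrace (V * dg N f * mat_adjoint V * X) = (\<Sum>k<N. f k * mtrace (proj (col V k) * X))"
proof -
  have cv: "col V k \<in> carrier_vec N" if "k < N" for k using V by (metis carrier_matD(1) carrier_vecI dim_col)
  have "mtrace (V * dg N f * mat_adjoint V * X) = (\<Sum>a<N. \<Sum>b<N. (V * dg N f * mat_adjoint V) $$ (a,b) * X $$ (b,a))"
    by (rule trace_mult_entry[OF udu_carrier[OF V] X])
  also have "\<dots> = (\<Sum>a<N. \<Sum>b<N. \<Sum>k<N. f k * (V $$ (a,k) * cnj (V $$ (b,k)) * X $$ (b,a)))"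
  proof (rule sum.cong[OF refl], rule sum.cong[OF refl])
    fix a b assume "a \<in> {..<N}" "b \<in> {..<N}"
    hence a: "a < N" and b: "b < N" by auto
    have "(V * dg N f * mat_adjoint V) $$ (a,b) * X $$ (b,a) = (\<Sum>k<N. V $$ (a,k) * f k * cnj (V $$ (b,k))) * X $$ (b,a)"
      by (simp only: udu_entry[OF V a b])
    also have "\<dots> = (\<Sum>k<N. V $$ (a,k) * f k * cnj (V $$ (b,k)) * X $$ (b,a))"
      by (rule sum_distrib_right)
    also have "\<dots> = (\<Sum>k<N. f k * (V $$ (a,k) * cnj (V $$ (b,k)) * X $$ (b,a)))"
      by (rule sum.cong[OF refl]) (simp only: mult_ac)
    finally show "(V * dg N f * mat_adjoint V) $$ (a,b) * X $$ (b,a) = (\<Sum>k<N. f k * (V $$ (a,k) * cnj (V $$ (b,k)) * X $$ (b,a)))" .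
  qed
  also have "\<dots> = (\<Sum>a<N. \<Sum>k<N. \<Sum>b<N. f k * (V $$ (a,k) * cnj (V $$ (b,k)) * X $$ (b,a)))"
    by (rule sum.cong[OF refl], rule sum.swap)
  also have "\<dots> = (\<Sum>k<N. \<Sum>a<N. \<Sum>b<N. f k * (V $$ (a,k) * cnj (V $$ (b,k)) * X $$ (b,a)))"
    by (rule sum.swap)
  also have "\<dots> = (\<Sum>k<N. f k * mtrace (proj (col V k) * X))"
  proof (rule sum.cong[OF refl])
    fix k assume "k \<in> {..<N}"
    hence k: "k < N" by simp
    have "mtrace (proj (col V k) * X) = (\<Sum>a<N. \<Sum>b<N. col V k $ a * cnj (col V k $ b) * X $$ (b,a))"
      by (rule proj_trace[OF cv[OF k] X])
    also have "\<dots> = (\<Sum>a<N. \<Sum>b<N. V $$ (a,k) * cnj (V $$ (b,k)) * X $$ (b,a))"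
      using V k by (intro sum.cong refl) auto
    finally show "(\<Sum>a<N. \<Sum>b<N. f k * (V $$ (a,k) * cnj (V $$ (b,k)) * X $$ (b,a))) = f k * mtrace (proj (col V k) * X)"
      by (simp add: sum_distrib_left)
  qed
  finally show ?thesis .
qed

theorem mainTheorem16:
  fixes \<delta> :: real
  assumes "0 < \<delta>" and "\<delta> < 1"
  shows "\<exists>C::real. \<forall>(d::nat) (\<epsilon>::real). 0 < d \<longrightarrow> 0 < \<epsilon> \<longrightarrow> \<epsilon> < 1 \<longrightarrow>
    (\<exists>(n::nat) (m::nat) (est :: nat \<Rightarrow> real) (M :: nat \<Rightarrow> complex mat).
       real n \<le> C / \<epsilon>\<^sup>2 \<and>
       povm (d ^ (n + 1)) m M \<and>
       (\<forall>\<rho> \<psi> \<theta>. density_matrix d \<rho> \<longrightarrow> unit_state d \<psi> \<longrightarrow>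
          mat_exp (- \<i> \<cdot>\<^sub>m \<rho>) *\<^sub>v \<psi> = exp (\<i> * complex_of_real \<theta>) \<cdot>\<^sub>v \<psi> \<longrightarrow>
          (\<Sum>k\<in>{k. k < m \<and> \<not> phase_close \<epsilon> (est k) \<theta>}.
              Re (mtrace (M k * kron (kpow \<rho> n) (proj \<psi>)))) \<le> \<delta>))"
proof -
  define C where "C = 1 / \<delta> + 1"
  show ?thesis
  proof (intro exI[of _ C] allI impI)
    fix d :: nat and \<epsilon> :: real
    assume d: "0 < d" and e0: "0 < \<epsilon>" and e1: "\<epsilon> < 1"
    define r where "r = 1 / (\<delta> * \<epsilon>\<^sup>2)"
    have rpos: "0 < r" unfolding r_def using assms e0 by simp
    define n where "n = nat \<lceil>r\<rceil>"
    have rn: "real n = of_int \<lceil>r\<rceil>" unfolding n_def using rpos by simp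
    have n_ge: "r \<le> real n" unfolding rn by (rule le_of_int_ceiling)
    have n_le: "real n \<le> r + 1" unfolding rn by (rule of_int_ceiling_le_add_one)
    have npos: "0 < n" using n_ge rpos by simp
    have e2: "\<epsilon>\<^sup>2 < 1" using e0 e1 by (simp add: power_less_one_iff)
    have e2pos: "0 < \<epsilon>\<^sup>2" using e0 by simp
    have nC: "real n \<le> C / \<epsilon>\<^sup>2"
    proof -
      have "1 \<le> 1 / \<epsilon>\<^sup>2" using e2 e2pos by simp
      moreover have "C / \<epsilon>\<^sup>2 = r + 1 / \<epsilon>\<^sup>2" unfolding C_def r_def using assms e2pos
        by (simp add: field_simps)
      ultimately show ?thesis using n_le by simp
    qed
    define N where "N = d^n*d"
    have Nn: "d ^ (n + 1) = N" unfolding N_def by simp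
    have Ocar: "Obs d n \<in> carrier_mat N N" unfolding N_def by simp
    obtain V and \<nu> :: "nat \<Rightarrow> real" where V: "V \<in> carrier_mat N N" and VV: "mat_adjoint V * V = 1\<^sub>m N"
      and VV2: "V * mat_adjoint V = 1\<^sub>m N" and Oeq: "Obs d n = V * dg N (\<lambda>i. complex_of_real (\<nu> i)) * mat_adjoint V"
      using spectral[OF Ocar Obs_herm] by blast
    define M where "M k = proj (col V k)" for k
    define est where "est k = - \<nu> k" for k
    have cv: "col V k \<in> carrier_vec N" if "k < N" for k using V by (metis carrier_matD(1) carrier_vecI dim_col)
    have povm: "povm (d ^ (n + 1)) N M"
      unfolding Nn povm_def
    proof (intro conjI allI impI)
      fix k assume "k < N"
      thus "psd N (M k)" unfolding M_def by (intro proj_psd cv)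
    next
      show "mat N N (\<lambda>(i, j). \<Sum>k<N. M k $$ (i, j)) = 1\<^sub>m N"
      proof (rule eq_matI)
        fix i j assume "i < dim_row (1\<^sub>m N)" "j < dim_col (1\<^sub>m N)"
        hence i: "i < N" and j: "j < N" by auto
        have "(\<Sum>k<N. M k $$ (i, j)) = (\<Sum>k<N. V $$ (i,k) * mat_adjoint V $$ (k,j))"
          using V i j by (intro sum.cong refl) (auto simp: M_def proj_def)
        also have "\<dots> = (V * mat_adjoint V) $$ (i,j)" by (rule mult_entry[OF V adj_carrier[OF V] i j, symmetric])
        finally show "mat N N (\<lambda>(i, j). \<Sum>k<N. M k $$ (i, j)) $$ (i,j) = 1\<^sub>m N $$ (i,j)"
          using VV2 i j by simp
      qed auto
    qed
    have main: "(\<Sum>k\<in>{k. k < N \<and> \<not> phase_close \<epsilon> (est k) \<theta>}.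
              Re (mtrace (M k * kron (kpow \<rho> n) (proj \<psi>)))) \<le> \<delta>"
      if dm: "density_matrix d \<rho>" and us: "unit_state d \<psi>"
        and ev: "mat_exp (- \<i> \<cdot>\<^sub>m \<rho>) *\<^sub>v \<psi> = exp (\<i> * complex_of_real \<theta>) \<cdot>\<^sub>v \<psi>" for \<rho> \<psi> \<theta>
    proof -
      obtain lam :: real and K :: int and B where eig: "\<rho> *\<^sub>v \<psi> = complex_of_real lam \<cdot>\<^sub>v \<psi>"
        and \<theta>eq: "\<theta> = - lam + 2 * pi * of_int K" and B: "B \<in> carrier_mat d d" and \<rho>B: "\<rho> = B * mat_adjoint B"
        using rho_analysis[OF dm us ev] by blast
      have \<rho>: "\<rho> \<in> carrier_mat d d" and tr: "mtrace \<rho> = 1"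
        using dm unfolding density_matrix_def psd_def by auto
      have \<psi>: "\<psi> \<in> carrier_vec d" and nrm0: "(\<Sum>i<d. cmod (\<psi> $ i) ^ 2) = 1"
        using us unfolding unit_state_def by auto
      have nrm: "(\<Sum>a<d. \<psi> $ a * cnj (\<psi> $ a)) = 1"
      proof -
        have "(\<Sum>a<d. \<psi> $ a * cnj (\<psi> $ a)) = (\<Sum>a<d. complex_of_real (cmod (\<psi> $ a) ^ 2))"
          by (intro sum.cong refl) (metis complex_norm_square)
        also have "\<dots> = complex_of_real (\<Sum>a<d. cmod (\<psi> $ a) ^ 2)" by simp
        finally show ?thesis using nrm0 by simp
      qed
      define X where "X = Xm d n \<rho> \<psi>"
      have Xeq: "kron (kpow \<rho> n) (proj \<psi>) = X" unfolding X_def Xm_def kpow_kchain ..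
      have X: "X \<in> carrier_mat N N" unfolding X_def N_def by (rule Xm_carrier[OF \<rho> \<psi>])
      define q where "q k = mtrace (M k * X)" for k
      define p where "p k = Re (q k)" for k
      have pnn: "0 \<le> p k" if k: "k < N" for k
      proof -
        have "X = kron (kchain (\<lambda>_. B) n) (mat d 1 (\<lambda>(a,_). \<psi> $ a))
           * mat_adjoint (kron (kchain (\<lambda>_. B) n) (mat d 1 (\<lambda>(a,_). \<psi> $ a)))"
          unfolding X_def \<rho>B by (rule kron_gram[OF B \<psi>])
        moreover have "kron (kchain (\<lambda>_. B) n) (mat d 1 (\<lambda>(a,_). \<psi> $ a)) \<in> carrier_mat N (d^n * 1)"
          unfolding N_def by (intro kron_carrier kchain_carrier) (use B in auto)
        ultimately show ?thesis unfolding p_def q_def M_def using gram_nonneg cv[OF k] by metis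
      qed
      have ident: "mtrace (V * dg N f * mat_adjoint V * X) = (\<Sum>k<N. f k * q k)" for f
        unfolding q_def M_def by (rule povm_identity[OF V X])
      have S0: "(\<Sum>k<N. q k) = 1"
      proof -
        have "V * dg N (\<lambda>_. 1) * mat_adjoint V = 1\<^sub>m N"
          using VV2 right_mult_one_mat[OF V] by (simp add: dg_one)
        hence "mtrace X = (\<Sum>k<N. 1 * q k)" using ident[of "\<lambda>_. 1"] X by simp
        moreover have "mtrace X = 1" unfolding X_def by (rule trX[OF \<rho> \<psi> tr eig nrm])
        ultimately show ?thesis by simp
      qed
      have S1: "(\<Sum>k<N. complex_of_real (\<nu> k) * q k) = complex_of_real lam"
        using ident[of "\<lambda>i. complex_of_real (\<nu> i)"] T1[OF \<rho> \<psi> tr eig nrm npos] Oeq X_def by simp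
      have S2: "(\<Sum>k<N. complex_of_real (\<nu> k) * complex_of_real (\<nu> k) * q k)
          = (1 + (of_nat n - 1) * (complex_of_real lam)^2) / of_nat n"
      proof -
        have "Obs d n * Obs d n = V * dg N (\<lambda>k. complex_of_real (\<nu> k) * complex_of_real (\<nu> k)) * mat_adjoint V"
          unfolding Oeq by (rule udu_mult[OF V VV])
        thus ?thesis using ident[of "\<lambda>k. complex_of_real (\<nu> k) * complex_of_real (\<nu> k)"]
            T2[OF \<rho> \<psi> tr eig nrm npos] X_def by simp
      qed
      have Sq: "(\<Sum>k<N. complex_of_real ((\<nu> k - lam)^2) * q k) = (1 - (complex_of_real lam)^2) / of_nat n"
      proof -
        have "(\<Sum>k<N. complex_of_real ((\<nu> k - lam)^2) * q k)
          = (\<Sum>k<N. complex_of_real (\<nu> k) * complex_of_real (\<nu> k) * q k)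
            - 2 * complex_of_real lam * (\<Sum>k<N. complex_of_real (\<nu> k) * q k)
            + (complex_of_real lam)^2 * (\<Sum>k<N. q k)"
          by (simp add: sum_distrib_left sum_subtractf sum.distrib power2_eq_square algebra_simps)
        also have "\<dots> = (1 - (complex_of_real lam)^2) / of_nat n"
          unfolding S0 S1 S2 using npos by (simp add: field_simps power2_eq_square)
        finally show ?thesis .
      qed
      have tot: "(\<Sum>k<N. p k * (\<nu> k - lam)^2) \<le> 1 / real n"
      proof -
        have "(\<Sum>k<N. p k * (\<nu> k - lam)^2) = Re (\<Sum>k<N. complex_of_real ((\<nu> k - lam)^2) * q k)"
          unfolding p_def by (simp add: mult.commute)
        also have "\<dots> = (1 - lam^2) / real n" unfolding Sq by (simp flip: of_real_power)
        also have "\<dots> \<le> 1 / real n" using npos by (simp add: divide_right_mono)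
        finally show ?thesis .
      qed
      have bad: "\<epsilon> < \<bar>\<nu> k - lam\<bar>" if k: "k \<in> {k. k < N \<and> \<not> phase_close \<epsilon> (est k) \<theta>}" for k
      proof (rule ccontr)
        assume "\<not> \<epsilon> < \<bar>\<nu> k - lam\<bar>"
        hence "\<bar>est k - \<theta> - 2 * pi * of_int (- K)\<bar> \<le> \<epsilon>" unfolding est_def \<theta>eq by simp
        hence "phase_close \<epsilon> (est k) \<theta>" unfolding phase_close_def by blast
        thus False using k by simp
      qed
      have "(\<Sum>k\<in>{k. k < N \<and> \<not> phase_close \<epsilon> (est k) \<theta>}. p k) \<le> (1 / real n) / \<epsilon>^2"
        by (rule cheb[where x="\<lambda>k. \<nu> k - lam", OF pnn _ bad e0 tot]) auto
      also have "(1 / real n) / \<epsilon>^2 \<le> \<delta>"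
      proof -
        have "1 / (\<delta> * \<epsilon>\<^sup>2) \<le> real n" using n_ge unfolding r_def .
        hence "1 \<le> real n * (\<delta> * \<epsilon>\<^sup>2)" using assms e2pos by (simp add: field_simps)
        thus ?thesis using npos e2pos by (simp add: field_simps)
      qed
      finally show ?thesis unfolding Xeq p_def q_def .
    qed
    show "\<exists>n m (est :: nat \<Rightarrow> real) (M :: nat \<Rightarrow> complex mat).
       real n \<le> C / \<epsilon>\<^sup>2 \<and>
       povm (d ^ (n + 1)) m M \<and>
       (\<forall>\<rho> \<psi> \<theta>. density_matrix d \<rho> \<longrightarrow> unit_state d \<psi> \<longrightarrow>
          mat_exp (- \<i> \<cdot>\<^sub>m \<rho>) *\<^sub>v \<psi> = exp (\<i> * complex_of_real \<theta>) \<cdot>\<^sub>v \<psi> \<longrightarrow>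
          (\<Sum>k\<in>{k. k < m \<and> \<not> phase_close \<epsilon> (est k) \<theta>}.
              Re (mtrace (M k * kron (kpow \<rho> n) (proj \<psi>)))) \<le> \<delta>)"
      using nC povm main by blast
  qed
qed


end
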